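(* $\mathrm{Isom}_{\mathbb Z}(L)$ is equal to each of the groups $\langle (x\,y),-1\rangle\ltimes G$, $\langle (y\,z),-1\rangle\ltimes G$, $\langle (z\,x),-1\rangle\ltimes G$ (semidirect products with $G$ normal). In particular $\mathrm{Isom}_{\mathbb Z}(L)\cong(\mathbb Z_2\times\mathbb Z_2)\ltimes G$.
   Context: $\mathbb F$ is a field of characteristic zero, $\mathfrak{sl}_2$ the Lie algebra of $2\times2$ trace-zero matrices over $\mathbb F$ with trace form $(u,v)=\mathrm{tr}(uv)$. Equitable basis: $x=\begin{pmatrix}1&0\\0&-1\end{pmatrix}$, $y=\begin{pmatrix}-1&2\\0&1\end{pmatrix}$, $z=\begin{pmatrix}-1&0\\-2&1\end{pmatrix}$. Let $x^*=\begin{pmatrix}1&-1\\1&-1\end{pmatrix}$, $y^*=\begin{pmatrix}0&0\\1&0\end{pmatrix}$, $z^*=\begin{pmatrix}0&-1\\0&0\end{pmatrix}$; $G$ is the subgroup of $\mathrm{Aut}_{\mathbb F}(\mathfrak{sl}_2)$ generated by $\exp(\mathrm{ad}\,x^* ),\exp(\mathrm{ad}\,y^* ),\exp(\mathrm{ad}\,z^* )$. $L=\mathbb Zx\oplus\mathbb Zy\oplus\mathbb Zz$. An isometry is an $\mathbb F$-linear bijection of $\mathfrak{sl}_2$ preserving the trace form; $\mathrm{Isom}_{\mathbb Z}(L)$ is the group of isometries $\varphi$ with $\varphi(L)=L$. For distinct $u,v\in\{x,y,z\}$, $(u\,v)$ is the $\mathbb F$-linear map interchanging $u,v$ and fixing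 the third basis element; $-1$ is $u\mapsto -u$. *)

theory Defs
  imports "HOL-Analysis.Determinants" "HOL-Algebra.Bij" "HOL-Algebra.Generated_Groups"
    "HOL-Algebra.Coset" "HOL-Algebra.Elementary_Groups"
begin

type_synonym 'a m2 = "'a^2^2"

definition mat2 :: "'a \<Rightarrow> 'a \<Rightarrow> 'a \<Rightarrow> 'a \<Rightarrow> 'a m2" where
  "mat2 a b c d = (\<chi> i j. if i = 1 then (if j = 1 then a else b) else (if j = 1 then c else d))"

definition msc :: "'a::times \<Rightarrow> 'a m2 \<Rightarrow> 'a m2" where
  "msc c A = (\<chi> i j. c * A$i$j)"

definition sl2 :: "('a::field_char_0) m2 set" where
  "sl2 = {A. trace A = 0}"

definition trform :: "('a::field_char_0) m2 \<Rightarrow> 'a m2 \<Rightarrow> 'a" where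
  "trform u v = trace (u ** v)"

definition ex :: "('a::field_char_0) m2" where "ex = mat2 1 0 0 (-1)"
definition ey :: "('a::field_char_0) m2" where "ey = mat2 (-1) 2 0 1"
definition ez :: "('a::field_char_0) m2" where "ez = mat2 (-1) 0 (-2) 1"
definition xs :: "('a::field_char_0) m2" where "xs = mat2 1 (-1) 1 (-1)"
definition ys :: "('a::field_char_0) m2" where "ys = mat2 0 0 1 0"
definition zs :: "('a::field_char_0) m2" where "zs = mat2 0 (-1) 0 0"

text \<open>F-linear self-maps of sl_2 (elements of the Bij group are extensional on sl_2).\<close>

definition sl2_linear :: "(('a::field_char_0) m2 \<Rightarrow> 'a m2) \<Rightarrow> bool" where
  "sl2_linear f \<longleftrightarrow> (\<forall>u\<in>sl2. f u \<in> sl2) \<and>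
     (\<forall>u\<in>sl2. \<forall>v\<in>sl2. f (u + v) = f u + f v) \<and>
     (\<forall>c. \<forall>u\<in>sl2. f (msc c u) = msc c (f u))"

text \<open>The adjoint map and exp(ad u); for nilpotent u (as x*, y*, z* are) ad u is nilpotent
  with (ad u)^3 = 0, so the exponential series is the finite sum below.\<close>

definition ad :: "('a::field_char_0) m2 \<Rightarrow> 'a m2 \<Rightarrow> 'a m2" where
  "ad u v = u ** v - v ** u"

definition exp_ad :: "('a::field_char_0) m2 \<Rightarrow> 'a m2 \<Rightarrow> 'a m2" where
  "exp_ad u = (\<lambda>v\<in>sl2. (\<Sum>k<4. msc (1 / fact k) ((ad u ^^ k) v)))"

definition Ggrp :: "(('a::field_char_0) m2 \<Rightarrow> 'a m2) set" where
  "Ggrp = generate (BijGroup sl2) {exp_ad xs, exp_ad ys, exp_ad zs}"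

definition Lat :: "('a::field_char_0) m2 set" where
  "Lat = {msc (of_int a) ex + msc (of_int b) ey + msc (of_int c) ez | a b c. True}"

definition isometry :: "(('a::field_char_0) m2 \<Rightarrow> 'a m2) \<Rightarrow> bool" where
  "isometry f \<longleftrightarrow> f \<in> Bij sl2 \<and> sl2_linear f \<and>
     (\<forall>u\<in>sl2. \<forall>v\<in>sl2. trform (f u) (f v) = trform u v)"

definition IsomZ :: "(('a::field_char_0) m2 \<Rightarrow> 'a m2) set" where
  "IsomZ = {f. isometry f \<and> f ` Lat = Lat}"

definition transp :: "('a::field_char_0) m2 \<Rightarrow> 'a m2 \<Rightarrow> 'a m2 \<Rightarrow> ('a m2 \<Rightarrow> 'a m2)" where
  "transp u v w = (THE f. f \<in> extensional sl2 \<and> sl2_linear f \<and> f u = v \<and> f v = u \<and> f w = w)"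

definition negmap :: "('a::field_char_0) m2 \<Rightarrow> 'a m2" where
  "negmap = (\<lambda>u\<in>sl2. - u)"

definition Hgrp :: "('a::field_char_0) m2 \<Rightarrow> 'a m2 \<Rightarrow> 'a m2 \<Rightarrow> ('a m2 \<Rightarrow> 'a m2) set" where
  "Hgrp u v w = generate (BijGroup sl2) {transp u v w, negmap}"

definition int_semidirect :: "(('a::field_char_0) m2 \<Rightarrow> 'a m2) set \<Rightarrow> _ \<Rightarrow> _ \<Rightarrow> bool" where
  "int_semidirect K H N \<longleftrightarrow>
     subgroup K (BijGroup sl2) \<and> subgroup H (BijGroup sl2) \<and>
     N \<lhd> (BijGroup sl2)\<lparr>carrier := K\<rparr> \<and> H \<subseteq> K \<and>
     H \<inter> N = {\<one>\<^bsub>BijGroup sl2\<^esub>} \<and> K = H <#>\<^bsub>BijGroup sl2\<^esub> N"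

end

theory Submission
  imports Defs
begin


lemma mat2_nth[simp]:
  "mat2 a b c d $ 1 $ 1 = a" "mat2 a b c d $ 1 $ 2 = b"
  "mat2 a b c d $ 2 $ 1 = c" "mat2 a b c d $ 2 $ 2 = d"
  by (simp_all add: mat2_def)

lemma m2_eq_iff: "(A::'a m2) = B \<longleftrightarrow> A$1$1 = B$1$1 \<and> A$1$2 = B$1$2 \<and> A$2$1 = B$2$1 \<and> A$2$2 = B$2$2"
  by (auto simp: vec_eq_iff forall_2)

lemma m2_expand: "(A::'a m2) = mat2 (A$1$1) (A$1$2) (A$2$1) (A$2$2)"
  by (simp add: m2_eq_iff)

lemma mat2_eq_iff[simp]: "mat2 a b c d = mat2 a' b' c' d' \<longleftrightarrow> a=a' \<and> b=b' \<and> c=c' \<and> d=d'"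
  by (simp add: m2_eq_iff)

lemma mat2_add[simp]: "mat2 a b c d + mat2 a' b' c' d' = mat2 (a+a') (b+b') (c+c') (d+d')"
  by (simp add: m2_eq_iff)
lemma mat2_sub[simp]: "mat2 a b c d - mat2 a' b' c' d' = mat2 (a-a') (b-b') (c-c') (d-d')"
  by (simp add: m2_eq_iff)
lemma mat2_neg[simp]: "- mat2 a b c d = mat2 (-a) (-b) (-c) (-d)"
  by (simp add: m2_eq_iff)
lemma mat2_mul[simp]: "mat2 a b c d ** mat2 a' b' c' d' = mat2 (a*a'+b*c') (a*b'+b*d') (c*a'+d*c') (c*b'+d*d')"
  by (simp add: m2_eq_iff matrix_matrix_mult_def sum_2)
lemma mat2_msc[simp]: "msc k (mat2 a b c d) = mat2 (k*a) (k*b) (k*c) (k*d)"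
  by (simp add: m2_eq_iff msc_def)
lemma mat2_trace[simp]: "trace (mat2 a b c d) = a + d"
  by (simp add: trace_def sum_2)
lemma mat2_zero: "(0::'a::zero m2) = mat2 0 0 0 0"
  by (simp add: m2_eq_iff)

lemma msc_zero[simp]: "msc k (0::'a::mult_zero m2) = 0"
  by (simp add: msc_def vec_eq_iff)



datatype 'b v3 = V3 'b 'b 'b
datatype mat3 = M3 int int int int int int int int int

fun mv :: "mat3 \<Rightarrow> 'b::comm_ring_1 v3 \<Rightarrow> 'b v3" where
  "mv (M3 a b c d e f g h i) (V3 x y z) =
     V3 (of_int a*x + of_int b*y + of_int c*z) (of_int d*x + of_int e*y + of_int f*z) (of_int g*x + of_int h*y + of_int i*z)"

fun mmul :: "mat3 \<Rightarrow> mat3 \<Rightarrow> mat3" where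
  "mmul (M3 a b c d e f g h i) (M3 a' b' c' d' e' f' g' h' i') =
    M3 (a*a'+b*d'+c*g') (a*b'+b*e'+c*h') (a*c'+b*f'+c*i')
       (d*a'+e*d'+f*g') (d*b'+e*e'+f*h') (d*c'+e*f'+f*i')
       (g*a'+h*d'+i*g') (g*b'+h*e'+i*h') (g*c'+h*f'+i*i')"

definition I3 :: mat3 where "I3 = M3 1 0 0 0 1 0 0 0 1"

fun Bf :: "'b::comm_ring_1 v3 \<Rightarrow> 'b v3 \<Rightarrow> 'b" where
  "Bf (V3 a b c) (V3 a' b' c') = 2*(a*a'+b*b'+c*c') - 2*(a*b'+b*a'+a*c'+c*a'+b*c'+c*b')"

fun col1 :: "mat3 \<Rightarrow> int v3" where "col1 (M3 a b c d e f g h i) = V3 a d g"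
fun col2 :: "mat3 \<Rightarrow> int v3" where "col2 (M3 a b c d e f g h i) = V3 b e h"
fun col3 :: "mat3 \<Rightarrow> int v3" where "col3 (M3 a b c d e f g h i) = V3 c f i"

fun ofi :: "int v3 \<Rightarrow> 'b::comm_ring_1 v3" where "ofi (V3 a b c) = V3 (of_int a) (of_int b) (of_int c)"
fun vadd :: "'b::comm_ring_1 v3 \<Rightarrow> 'b v3 \<Rightarrow> 'b v3" where "vadd (V3 a b c) (V3 a' b' c') = V3 (a+a') (b+b') (c+c')"
fun vsc :: "'b::comm_ring_1 \<Rightarrow> 'b v3 \<Rightarrow> 'b v3" where "vsc k (V3 a b c) = V3 (k*a) (k*b) (k*c)"

definition Wv :: "'a::field_char_0 v3 \<Rightarrow> 'a m2" where
  "Wv t = (case t of V3 a b c \<Rightarrow> mat2 (a-b-c) (2*b) (-2*c) (-a+b+c))"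
definition crd :: "'a::field_char_0 m2 \<Rightarrow> 'a v3" where
  "crd M = V3 (M$1$1 + M$1$2/2 - M$2$1/2) (M$1$2/2) (-(M$2$1)/2)"
definition Lmap :: "mat3 \<Rightarrow> 'a::field_char_0 m2 \<Rightarrow> 'a m2" where
  "Lmap A = (\<lambda>X\<in>sl2. Wv (mv A (crd X)))"

lemma Wv_V3: "Wv (V3 a b c) = mat2 (a-b-c) (2*b) (-2*c) (-a+b+c)"
  by (simp add: Wv_def)

lemma Wv_sl2[simp]: "Wv t \<in> sl2"
  by (cases t) (simp add: Wv_V3 sl2_def)

lemma crd_Wv[simp]: "crd (Wv t) = t"
  by (cases t) (simp add: Wv_V3 crd_def)

lemma Wv_crd: "X \<in> sl2 \<Longrightarrow> Wv (crd X) = X"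
proof -
  assume "X \<in> sl2"
  then have "X$2$2 = - X$1$1" by (simp add: sl2_def trace_def sum_2 add_eq_0_iff)
  then show ?thesis by (simp add: m2_eq_iff Wv_V3 crd_def field_simps)
qed

lemma Wv_inj[simp]: "Wv s = Wv t \<longleftrightarrow> s = t"
  by (metis crd_Wv)

lemma sl2_iff: "X \<in> sl2 \<longleftrightarrow> (\<exists>t. X = Wv t)"
  by (metis Wv_crd Wv_sl2)

lemma ex_Wv: "ex = Wv (V3 1 0 0)" by (simp add: ex_def Wv_V3)
lemma ey_Wv: "ey = Wv (V3 0 1 0)" by (simp add: ey_def Wv_V3)
lemma ez_Wv: "ez = Wv (V3 0 0 1)" by (simp add: ez_def Wv_V3)

lemma trform_Wv: "trform (Wv s) (Wv t) = Bf s t"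
  by (cases s; cases t) (simp add: trform_def Wv_V3 algebra_simps)

lemma Wv_add: "Wv s + Wv t = Wv (vadd s t)"
  by (cases s; cases t) (simp add: Wv_V3 algebra_simps)
lemma Wv_msc: "msc k (Wv t) = Wv (vsc k t)"
  by (cases t) (simp add: Wv_V3 algebra_simps)

lemma Wv_ofi_lin: "Wv (ofi (V3 a b c)) = msc (of_int a) ex + msc (of_int b) ey + msc (of_int c) ez"
  by (simp add: Wv_V3 ex_def ey_def ez_def algebra_simps)

lemma Lat_eq: "Lat = range (\<lambda>s. Wv (ofi s))"
proof -
  have "Wv (ofi s) \<in> Lat" for s :: "int v3"
  proof (cases s)
    case (V3 a b c) then show ?thesis unfolding Lat_def using Wv_ofi_lin[of a b c] by blast
  qed
  moreover have "X \<in> range (\<lambda>s. Wv (ofi s))" if "X \<in> Lat" for X :: "'a m2"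
  proof -
    from that obtain a b c where "X = Wv (ofi (V3 a b c))" by (auto simp: Lat_def Wv_ofi_lin[symmetric])
    then show ?thesis by blast
  qed
  ultimately show ?thesis by blast
qed

lemma mv_ofi: "mv A (ofi s) = ofi (mv A s)"
  by (cases A; cases s) simp
lemma mv_mmul: "mv (mmul A B) s = mv A (mv B s)"
  by (cases A; cases B; cases s) (simp add: algebra_simps)
lemma mmul_assoc: "mmul (mmul A B) C = mmul A (mmul B C)"
  by (cases A; cases B; cases C) (simp add: algebra_simps)
lemma mv_vadd: "mv A (vadd s t) = vadd (mv A s) (mv A t)"
  by (cases A; cases s; cases t) (simp add: algebra_simps)
lemma mv_vsc: "mv A (vsc k t) = vsc k (mv A t)"
  by (cases A; cases t) (simp add: algebra_simps)
lemma mv_I3[simp]: "mv I3 s = s"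
  by (cases s) (simp add: I3_def)
lemma ofi_inj[simp]: "(ofi s :: 'a::field_char_0 v3) = ofi t \<longleftrightarrow> s = t"
  by (cases s; cases t) simp

lemma crd_add: "X \<in> sl2 \<Longrightarrow> Y \<in> sl2 \<Longrightarrow> crd (X + Y) = vadd (crd X) (crd Y)"
  by (metis Wv_add Wv_crd crd_Wv)
lemma crd_msc: "X \<in> sl2 \<Longrightarrow> crd (msc k X) = vsc k (crd X)"
  by (metis Wv_msc Wv_crd crd_Wv)

lemma Lmap_Wv[simp]: "Lmap A (Wv t) = Wv (mv A t)"
  by (simp add: Lmap_def)

lemma Lmap_sl2: "X \<in> sl2 \<Longrightarrow> Lmap A X \<in> sl2"
  by (auto simp: Lmap_def)

lemma Lmap_ext: "Lmap A \<in> extensional sl2"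
  by (simp add: Lmap_def)

lemma Lmap_compose: "compose sl2 (Lmap A) (Lmap B) = Lmap (mmul A B)"
  by (rule ext) (auto simp: compose_def Lmap_def mv_mmul)

lemma Lmap_I3: "Lmap I3 = (\<lambda>x\<in>sl2. x)"
  by (rule ext) (auto simp: Lmap_def Wv_crd)

lemma mat3_eq_cols: "A = B \<longleftrightarrow> mv A (V3 1 0 0) = (mv B (V3 1 0 0) :: 'a::field_char_0 v3)
    \<and> mv A (V3 0 1 0) = (mv B (V3 0 1 0) :: 'a v3) \<and> mv A (V3 0 0 1) = (mv B (V3 0 0 1) :: 'a v3)"
  by (cases A; cases B) auto

lemma Lmap_inj: "(Lmap A :: 'a::field_char_0 m2 \<Rightarrow> 'a m2) = Lmap B \<longleftrightarrow> A = B"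
proof
  assume h: "(Lmap A :: 'a m2 \<Rightarrow> 'a m2) = Lmap B"
  have "\<And>t. (Wv (mv A t) :: 'a m2) = Wv (mv B t)"
    by (metis Lmap_Wv h)
  then show "A = B" unfolding mat3_eq_cols[where 'a='a] by simp
qed simp



lemma Bf_sym: "Bf s t = Bf t s"
  by (cases s; cases t) (simp add: algebra_simps)

lemma Bf_ofi: "Bf (ofi s) (ofi t) = (of_int (Bf s t) :: 'b::comm_ring_1)"
  by (cases s; cases t) simp

lemma bf_mv: "Bf (mv A (V3 x y z)) (mv A (V3 x' y' z')) =
   x*x'*of_int (Bf (col1 A) (col1 A)) + x*y'*of_int (Bf (col1 A) (col2 A)) + x*z'*of_int (Bf (col1 A) (col3 A)) +
   y*x'*of_int (Bf (col2 A) (col1 A)) + y*y'*of_int (Bf (col2 A) (col2 A)) + y*z'*of_int (Bf (col2 A) (col3 A)) +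
   z*x'*of_int (Bf (col3 A) (col1 A)) + z*y'*of_int (Bf (col3 A) (col2 A)) + z*z'*of_int (Bf (col3 A) (col3 A))"
  by (cases A) (simp add: algebra_simps)

definition isom3 :: "mat3 \<Rightarrow> bool" where
  "isom3 A \<longleftrightarrow> Bf (col1 A) (col1 A) = 2 \<and> Bf (col2 A) (col2 A) = 2 \<and> Bf (col3 A) (col3 A) = 2 \<and>
     Bf (col1 A) (col2 A) = -2 \<and> Bf (col1 A) (col3 A) = -2 \<and> Bf (col2 A) (col3 A) = -2"

lemma isom3_Bf: "isom3 A \<Longrightarrow> Bf (mv A s) (mv A t) = (Bf s t :: 'b::comm_ring_1)"
proof -
  assume h: "isom3 A"
  obtain x y z where s: "s = V3 x y z" by (cases s)
  obtain x' y' z' where t: "t = V3 x' y' z'" by (cases t)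
  have e: "Bf (col2 A) (col1 A) = -2" "Bf (col3 A) (col1 A) = -2" "Bf (col3 A) (col2 A) = -2"
    using h by (simp_all add: isom3_def Bf_sym)
  show ?thesis using h e unfolding s t bf_mv isom3_def by (simp add: algebra_simps)
qed

lemma col_mmul: "col1 (mmul A B) = mv A (col1 B)" "col2 (mmul A B) = mv A (col2 B)" "col3 (mmul A B) = mv A (col3 B)"
  by (cases A; cases B; simp)+

lemma isom3_mmul: "isom3 A \<Longrightarrow> isom3 B \<Longrightarrow> isom3 (mmul A B)"
  by (simp add: isom3_def col_mmul isom3_Bf)

lemma isom3_I3: "isom3 I3" by (simp add: isom3_def I3_def)

lemma isom3_inv: "isom3 A \<Longrightarrow> mmul A B = I3 \<Longrightarrow> isom3 B"
proof -
  assume a: "isom3 A" and b: "mmul A B = I3"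
  have k: "\<And>p q. Bf (mv A p) (mv A q) = Bf p (q::int v3)" by (rule isom3_Bf[OF a])
  have "isom3 (mmul A B)" using b isom3_I3 by simp
  then show ?thesis by (simp add: isom3_def col_mmul k)
qed

definition isoZ :: "mat3 \<Rightarrow> bool" where
  "isoZ A \<longleftrightarrow> isom3 A \<and> (\<exists>B. mmul A B = I3 \<and> mmul B A = I3)"

lemma mmul_I3: "mmul I3 A = A" "mmul A I3 = A"
  by (cases A; simp add: I3_def)+

lemma Lmap_Bij: "mmul A B = I3 \<Longrightarrow> mmul B A = I3 \<Longrightarrow> (Lmap A :: 'a::field_char_0 m2 \<Rightarrow> _) \<in> Bij sl2"
proof -
  assume ab: "mmul A B = I3" and ba: "mmul B A = I3"
  have "bij_betw (Lmap A :: 'a m2 \<Rightarrow> _) sl2 sl2"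
  proof (rule bij_betw_byWitness[where f'="Lmap B"])
    show "\<forall>a\<in>sl2. Lmap B (Lmap A a :: 'a m2) = a"
      by (auto simp: sl2_iff mv_mmul[symmetric] ba)
    show "\<forall>a\<in>sl2. Lmap A (Lmap B a :: 'a m2) = a"
      by (auto simp: sl2_iff mv_mmul[symmetric] ab)
    show "Lmap A ` sl2 \<subseteq> (sl2 :: 'a m2 set)" by (auto simp: Lmap_sl2)
    show "Lmap B ` sl2 \<subseteq> (sl2 :: 'a m2 set)" by (auto simp: Lmap_sl2)
  qed
  then show ?thesis by (simp add: Bij_def Lmap_ext)
qed

lemma sl2_add: "X \<in> sl2 \<Longrightarrow> Y \<in> sl2 \<Longrightarrow> X + Y \<in> sl2"
  by (auto simp: sl2_iff Wv_add)
lemma sl2_msc: "X \<in> sl2 \<Longrightarrow> msc k X \<in> sl2"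
  by (auto simp: sl2_iff Wv_msc)

lemma Lmap_linear: "sl2_linear (Lmap A :: 'a::field_char_0 m2 \<Rightarrow> _)"
  unfolding sl2_linear_def
  by (auto simp: Lmap_sl2 sl2_iff Wv_add Wv_msc mv_vadd mv_vsc)

lemma Lmap_IsomZ: "isoZ A \<Longrightarrow> (Lmap A :: 'a::field_char_0 m2 \<Rightarrow> _) \<in> IsomZ"
proof -
  assume h: "isoZ A"
  then obtain B where ab: "mmul A B = I3" and ba: "mmul B A = I3" and i: "isom3 A" by (auto simp: isoZ_def)
  have iso: "isometry (Lmap A :: 'a m2 \<Rightarrow> _)"
    unfolding isometry_def using Lmap_Bij[OF ab ba] Lmap_linear
    by (auto simp: sl2_iff trform_Wv isom3_Bf[OF i])
  have "Lmap A ` Lat = (Lat :: 'a m2 set)"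
  proof
    show "Lmap A ` Lat \<subseteq> (Lat :: 'a m2 set)"
      by (auto simp: Lat_eq mv_ofi)
    show "(Lat :: 'a m2 set) \<subseteq> Lmap A ` Lat"
    proof
      fix X :: "'a m2" assume "X \<in> Lat"
      then obtain s where X: "X = Wv (ofi s)" by (auto simp: Lat_eq)
      show "X \<in> Lmap A ` Lat"
      proof (rule image_eqI)
        show "X = Lmap A (Wv (ofi (mv B s)))" by (simp add: X mv_ofi mv_mmul[symmetric] ab)
        show "Wv (ofi (mv B s)) \<in> (Lat :: 'a m2 set)" by (auto simp: Lat_eq)
      qed
    qed
  qed
  with iso show ?thesis by (simp add: IsomZ_def)
qed

fun mkcols :: "int v3 \<Rightarrow> int v3 \<Rightarrow> int v3 \<Rightarrow> mat3" where
  "mkcols (V3 a d g) (V3 b e h) (V3 c f i) = M3 a b c d e f g h i"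

lemma Wv_lin: "Wv (V3 a b c) = msc a ex + msc b ey + msc c ez"
  by (simp add: Wv_V3 ex_def ey_def ez_def algebra_simps)

lemma mkcols_lin: "msc a (Wv (ofi u)) + msc b (Wv (ofi v)) + msc c (Wv (ofi w)) = (Wv (mv (mkcols u v w) (V3 a b c)) :: 'a::field_char_0 m2)"
  by (cases u; cases v; cases w) (simp add: Wv_V3 algebra_simps)

lemma ex_sl2: "ex \<in> sl2" and ey_sl2: "ey \<in> sl2" and ez_sl2: "ez \<in> sl2"
  by (simp_all add: ex_Wv ey_Wv ez_Wv)

lemma lin_basis:
  assumes f: "sl2_linear f" "f \<in> extensional sl2"
    and fx: "f ex = Wv (ofi u)" and fy: "f ey = Wv (ofi v)" and fz: "f ez = Wv (ofi w)"
  shows "f = Lmap (mkcols u v w)"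
proof (rule ext)
  fix X :: "'a::field_char_0 m2"
  show "f X = Lmap (mkcols u v w) X"
  proof (cases "X \<in> sl2")
    case True
    obtain a b c where X: "X = Wv (V3 a b c)" by (metis True Wv_crd v3.exhaust)
    have "f X = msc a (f ex) + msc b (f ey) + msc c (f ez)"
      using f(1) unfolding X Wv_lin sl2_linear_def
      by (simp add: ex_sl2 ey_sl2 ez_sl2 sl2_add sl2_msc)
    then show ?thesis by (simp add: fx fy fz mkcols_lin X)
  next
    case False then show ?thesis using f(2) Lmap_ext by (metis extensional_arb)
  qed
qed

lemma IsomZ_Lmap:
  assumes f: "(f :: 'a::field_char_0 m2 \<Rightarrow> _) \<in> IsomZ"
  shows "\<exists>A. isom3 A \<and> f = Lmap A"
proof -
  have iso: "isometry f" and L: "f ` Lat = Lat" using f by (auto simp: IsomZ_def)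
  have ext: "f \<in> extensional sl2" using iso by (auto simp: isometry_def Bij_def)
  have lin: "sl2_linear f" using iso by (auto simp: isometry_def)
  have tr: "\<And>u v. u \<in> sl2 \<Longrightarrow> v \<in> sl2 \<Longrightarrow> trform (f u) (f v) = trform u v" using iso by (auto simp: isometry_def)
  have inL: "\<And>s. Wv (ofi s) \<in> (Lat :: 'a m2 set)" by (auto simp: Lat_eq)
  have exL: "ex = Wv (ofi (V3 1 0 0))" "ey = Wv (ofi (V3 0 1 0))" "ez = Wv (ofi (V3 0 0 1))"
    by (simp_all add: ex_Wv ey_Wv ez_Wv)
  have fL: "\<And>X. X \<in> Lat \<Longrightarrow> f X \<in> Lat" using L by blast
  have "f ex \<in> Lat" using fL[OF inL[of "V3 1 0 0"]] by (simp add: ex_Wv)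
  then obtain u where u: "f ex = Wv (ofi u)" by (auto simp: Lat_eq)
  have "f ey \<in> Lat" using fL[OF inL[of "V3 0 1 0"]] by (simp add: ey_Wv)
  then obtain v where v: "f ey = Wv (ofi v)" by (auto simp: Lat_eq)
  have "f ez \<in> Lat" using fL[OF inL[of "V3 0 0 1"]] by (simp add: ez_Wv)
  then obtain w where w: "f ez = Wv (ofi w)" by (auto simp: Lat_eq)
  have fA: "f = Lmap (mkcols u v w)" by (rule lin_basis[OF lin ext u v w])
  have g: "(of_int (Bf p q) :: 'a) = of_int (Bf p' q')"
    if "f (Wv (ofi p')) = Wv (ofi p)" "f (Wv (ofi q')) = Wv (ofi q)" for p q p' q'
    using tr[of "Wv (ofi p')" "Wv (ofi q')"] that by (simp add: trform_Wv Bf_ofi)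
  have m2: "\<And>k. (of_int k::'a) = -2 \<Longrightarrow> k = -2" by (metis of_int_eq_iff of_int_minus of_int_numeral)
  have "Bf u u = 2" "Bf v v = 2" "Bf w w = 2" "Bf u v = -2" "Bf u w = -2" "Bf v w = -2"
    using g[OF u[unfolded exL] u[unfolded exL]] g[OF v[unfolded exL] v[unfolded exL]]
      g[OF w[unfolded exL] w[unfolded exL]] g[OF u[unfolded exL] v[unfolded exL]]
      g[OF u[unfolded exL] w[unfolded exL]] g[OF v[unfolded exL] w[unfolded exL]]
    by (simp_all add: m2)
  then have "isom3 (mkcols u v w)"
    by (cases u; cases v; cases w) (simp add: isom3_def)
  with fA show ?thesis by blast
qed



definition "mG1 = M3 1 0 0 2 2 (-1) 0 1 0"
definition "mG2 = M3 0 0 1 0 1 0 (-1) 2 2"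
definition "mG3 = M3 2 (-1) 2 1 0 0 0 0 1"
definition "mG1i = M3 1 0 0 0 0 1 2 (-1) 2"
definition "mG2i = M3 2 2 (-1) 0 1 0 1 0 0"
definition "mG3i = M3 0 1 0 (-1) 2 2 0 0 1"
definition "mTxy = M3 0 1 0 1 0 0 0 0 1"
definition "mTyz = M3 1 0 0 0 0 1 0 1 0"
definition "mTzx = M3 0 0 1 0 1 0 1 0 0"
definition "mNEG = M3 (-1) 0 0 0 (-1) 0 0 0 (-1)"
definition "mRx = M3 (-1) 2 2 0 1 0 0 0 1"
definition "mRy = M3 1 0 0 2 (-1) 2 0 0 1"
definition "mRz = M3 1 0 0 0 1 0 2 2 (-1)"

lemmas mdefs = mG1_def mG2_def mG3_def mG1i_def mG2i_def mG3i_def mTxy_def mTyz_def mTzx_def mNEG_def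
  mRx_def mRy_def mRz_def I3_def

lemma exp_ad_Lmap:
  assumes "\<And>a b c. (\<Sum>k<4. msc (1 / fact k) ((ad u ^^ k) (Wv (V3 a b c)))) = Wv (mv A (V3 a b c))"
  shows "(exp_ad u :: 'a::field_char_0 m2 \<Rightarrow> _) = Lmap A"
proof (rule ext)
  fix X :: "'a m2"
  show "exp_ad u X = Lmap A X"
  proof (cases "X \<in> sl2")
    case True
    then obtain a b c where "X = Wv (V3 a b c)" by (metis Wv_crd v3.exhaust)
    then show ?thesis using assms by (simp add: exp_ad_def)
  next
    case False then show ?thesis by (simp add: exp_ad_def Lmap_def)
  qed
qed

lemma sum4: "(\<Sum>k<4::nat. f k) = f 0 + f 1 + f 2 + f 3"
  by (simp add: eval_nat_numeral)

lemma fact3: "fact 3 = (6::'a::field_char_0)" by (simp add: eval_nat_numeral)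
lemma fact2: "fact 2 = (2::'a::field_char_0)" by (simp add: eval_nat_numeral)

lemma expG1: "(exp_ad xs :: 'a::field_char_0 m2 \<Rightarrow> _) = Lmap mG1"
  by (rule exp_ad_Lmap) (simp add: sum4 ad_def xs_def Wv_V3 mG1_def fact3 fact2 eval_nat_numeral field_simps)

lemma expG2: "(exp_ad ys :: 'a::field_char_0 m2 \<Rightarrow> _) = Lmap mG2"
  by (rule exp_ad_Lmap) (simp add: sum4 ad_def ys_def Wv_V3 mG2_def fact3 fact2 eval_nat_numeral field_simps)

lemma expG3: "(exp_ad zs :: 'a::field_char_0 m2 \<Rightarrow> _) = Lmap mG3"
  by (rule exp_ad_Lmap) (simp add: sum4 ad_def zs_def Wv_V3 mG3_def fact3 fact2 eval_nat_numeral field_simps)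



lemma nm_id: "(a::int)^2+b^2+c^2-2*a*b-2*a*c-2*b*c = (a-b-c)^2 - 4*b*c"
  by (simp add: power2_eq_square algebra_simps)

lemma same_sign:
  assumes "(a::int)^2+b^2+c^2-2*a*b-2*a*c-2*b*c = -3"
  shows "a*b > 0" "b*c > 0" "a*c > 0"
proof -
  have "4*(b*c) = (a-b-c)^2 + 3" using assms nm_id[of a b c] by simp
  moreover have "(a-b-c)^2 \<ge> 0" by simp
  ultimately show "b*c > 0" by linarith
  have "4*(a*c) = (b-a-c)^2 + 3" using assms nm_id[of b a c] by (simp add: algebra_simps)
  moreover have "(b-a-c)^2 \<ge> 0" by simp
  ultimately show "a*c > 0" by linarith
  have "4*(a*b) = (c-a-b)^2 + 3" using assms nm_id[of c a b] by (simp add: algebra_simps)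
  moreover have "(c-a-b)^2 \<ge> 0" by simp
  ultimately show "a*b > 0" by linarith
qed

lemma chamber:
  assumes n: "(a::int)^2+b^2+c^2-2*a*b-2*a*c-2*b*c = -3"
    and p: "a > 0" "b > 0" "c > 0" and h: "a \<le> b+c" "b \<le> a+c" "c \<le> a+b"
  shows "a = 1 \<and> b = 1 \<and> c = 1"
proof -
  define d where "d = b+c-a"
  define e where "e = a+c-b"
  define f where "f = a+b-c"
  have d0: "d \<ge> 0" "e \<ge> 0" "f \<ge> 0" using h by (auto simp: d_def e_def f_def)
  have key: "d*e + e*f + d*f = 3" using n unfolding d_def e_def f_def by (simp add: power2_eq_square algebra_simps)
  have "d*e \<ge> 0" "e*f \<ge> 0" "d*f \<ge> 0" using d0 by auto
  then have b3: "d*e \<le> 3" "e*f \<le> 3" "d*f \<le> 3" using key by linarith+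
  have "d + e = 2*c" "e + f = 2*a" "d + f = 2*b" by (auto simp: d_def e_def f_def)
  then have pos: "d + e \<ge> 2" "e + f \<ge> 2" "d + f \<ge> 2" using p by auto
  have "d \<le> 3"
  proof (rule ccontr)
    assume "\<not> d \<le> 3" then have "d \<ge> 4" by simp
    have "e = 0"
    proof (rule ccontr)
      assume "e \<noteq> 0" then have "e \<ge> 1" using d0 by simp
      then have "d*e \<ge> 4*1" using \<open>d \<ge> 4\<close> by (intro mult_mono) auto
      then show False using b3 by simp
    qed
    have "f = 0"
    proof (rule ccontr)
      assume "f \<noteq> 0" then have "f \<ge> 1" using d0 by simp
      then have "d*f \<ge> 4*1" using \<open>d \<ge> 4\<close> by (intro mult_mono) auto
      then show False using b3 by simp
    qed
    then show False using pos \<open>e = 0\<close> by simp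
  qed
  moreover have "e \<le> 3"
  proof (rule ccontr)
    assume "\<not> e \<le> 3" then have "e \<ge> 4" by simp
    have "d = 0"
    proof (rule ccontr)
      assume "d \<noteq> 0" then have "d \<ge> 1" using d0 by simp
      then have "d*e \<ge> 1*4" using \<open>e \<ge> 4\<close> by (intro mult_mono) auto
      then show False using b3 by simp
    qed
    have "f = 0"
    proof (rule ccontr)
      assume "f \<noteq> 0" then have "f \<ge> 1" using d0 by simp
      then have "e*f \<ge> 4*1" using \<open>e \<ge> 4\<close> by (intro mult_mono) auto
      then show False using b3 by simp
    qed
    then show False using pos \<open>d = 0\<close> by simp
  qed
  moreover have "f \<le> 3"
  proof (rule ccontr)
    assume "\<not> f \<le> 3" then have "f \<ge> 4" by simp
    have "d = 0"
    proof (rule ccontr)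
      assume "d \<noteq> 0" then have "d \<ge> 1" using d0 by simp
      then have "d*f \<ge> 1*4" using \<open>f \<ge> 4\<close> by (intro mult_mono) auto
      then show False using b3 by simp
    qed
    have "e = 0"
    proof (rule ccontr)
      assume "e \<noteq> 0" then have "e \<ge> 1" using d0 by simp
      then have "e*f \<ge> 1*4" using \<open>f \<ge> 4\<close> by (intro mult_mono) auto
      then show False using b3 by simp
    qed
    then show False using pos \<open>d = 0\<close> by simp
  qed
  ultimately have "d \<in> {0,1,2,3}" "e \<in> {0,1,2,3}" "f \<in> {0,1,2,3}" using d0 by auto
  then have "d = 1 \<and> e = 1 \<and> f = 1" using key pos
    by auto
  then show ?thesis unfolding d_def e_def f_def by simp
qed

lemma unitvec:
  assumes n: "(p::int)^2+q^2+r^2-2*p*q-2*p*r-2*q*r = 1" and s: "p+q+r = 1"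
  shows "(p = 1 \<and> q = 0 \<and> r = 0) \<or> (p = 0 \<and> q = 1 \<and> r = 0) \<or> (p = 0 \<and> q = 0 \<and> r = 1)"
proof -
  have "(p+q+r)^2 = 1" using s by simp
  then have sq: "p^2+q^2+r^2 = 1" using n by (simp add: power2_eq_square algebra_simps)
  have "p^2 \<le> 1" "q^2 \<le> 1" "r^2 \<le> 1" using sq by (smt (verit) zero_le_power2)+
  then have "\<bar>p\<bar> \<le> 1" "\<bar>q\<bar> \<le> 1" "\<bar>r\<bar> \<le> 1"
    by (metis abs_le_square_iff abs_one one_power2 power2_abs)+
  then have "p \<in> {-1,0,1}" "q \<in> {-1,0,1}" "r \<in> {-1,0,1}" by auto
  then show ?thesis using s sq by auto
qed



lemma BG_carrier: "carrier (BijGroup S) = Bij S" by (simp add: BijGroup_def)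
lemma BG_mult: "f \<in> Bij S \<Longrightarrow> g \<in> Bij S \<Longrightarrow> f \<otimes>\<^bsub>BijGroup S\<^esub> g = compose S f g" by (simp add: BijGroup_def)
lemma BG_one: "\<one>\<^bsub>BijGroup S\<^esub> = (\<lambda>x\<in>S. x)" by (simp add: BijGroup_def)
lemma grpBG: "group (BijGroup S)" by (rule group_BijGroup)

lemma isoZ_intro: "isom3 A \<Longrightarrow> mmul A B = I3 \<Longrightarrow> mmul B A = I3 \<Longrightarrow> isoZ A"
  by (auto simp: isoZ_def)

lemma isoZ_mmul: "isoZ A \<Longrightarrow> isoZ B \<Longrightarrow> isoZ (mmul A B)"
proof -
  assume a: "isoZ A" and b: "isoZ B"
  then obtain A' B' where "mmul A A' = I3" "mmul A' A = I3" "mmul B B' = I3" "mmul B' B = I3"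
    by (auto simp: isoZ_def)
  then have "mmul (mmul A B) (mmul B' A') = I3" "mmul (mmul B' A') (mmul A B) = I3"
    by (simp_all add: mmul_assoc, simp_all add: mmul_assoc[symmetric] mmul_I3)
  with a b show ?thesis by (auto simp: isoZ_def isom3_mmul)
qed

lemma isoZ_inv: "isoZ A \<Longrightarrow> mmul A B = I3 \<Longrightarrow> mmul B A = I3 \<Longrightarrow> isoZ B"
  by (auto simp: isoZ_def intro: isom3_inv)

lemma Lmap_carrier: "isoZ A \<Longrightarrow> (Lmap A :: 'a::field_char_0 m2 \<Rightarrow> _) \<in> carrier (BijGroup sl2)"
  by (auto simp: isoZ_def BG_carrier intro: Lmap_Bij)

lemma Lmap_mult: "(Lmap A :: 'a::field_char_0 m2 \<Rightarrow> _) \<in> carrier (BijGroup sl2) \<Longrightarrow> (Lmap B :: 'a m2 \<Rightarrow> _) \<in> carrier (BijGroup sl2) \<Longrightarrow>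
   (Lmap A :: 'a m2 \<Rightarrow> _) \<otimes>\<^bsub>BijGroup sl2\<^esub> Lmap B = Lmap (mmul A B)"
  unfolding BG_carrier by (subst BG_mult) (assumption+, rule Lmap_compose)

lemma Lmap_one: "\<one>\<^bsub>BijGroup sl2\<^esub> = (Lmap I3 :: 'a::field_char_0 m2 \<Rightarrow> _)"
  by (simp add: BG_one Lmap_I3)

lemma Lmap_inv: "isoZ A \<Longrightarrow> mmul A B = I3 \<Longrightarrow> mmul B A = I3 \<Longrightarrow>
   inv\<^bsub>BijGroup sl2\<^esub> (Lmap A :: 'a::field_char_0 m2 \<Rightarrow> _) = Lmap B"
proof -
  assume a: "isoZ A" and ab: "mmul A B = I3" and ba: "mmul B A = I3"
  have b: "isoZ B" by (rule isoZ_inv[OF a ab ba])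
  show ?thesis
    by (rule group.inv_equality[OF grpBG])
       (simp_all add: Lmap_carrier[OF a] Lmap_carrier[OF b] Lmap_mult ba Lmap_one)
qed

lemma isoZ_G1: "isoZ mG1" by (rule isoZ_intro[where B=mG1i]) (simp_all add: isom3_def mdefs)
lemma isoZ_G2: "isoZ mG2" by (rule isoZ_intro[where B=mG2i]) (simp_all add: isom3_def mdefs)
lemma isoZ_G3: "isoZ mG3" by (rule isoZ_intro[where B=mG3i]) (simp_all add: isom3_def mdefs)
lemma isoZ_G1i: "isoZ mG1i" by (rule isoZ_intro[where B=mG1]) (simp_all add: isom3_def mdefs)
lemma isoZ_G2i: "isoZ mG2i" by (rule isoZ_intro[where B=mG2]) (simp_all add: isom3_def mdefs)
lemma isoZ_G3i: "isoZ mG3i" by (rule isoZ_intro[where B=mG3]) (simp_all add: isom3_def mdefs)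
lemma isoZ_Txy: "isoZ mTxy" by (rule isoZ_intro[where B=mTxy]) (simp_all add: isom3_def mdefs)
lemma isoZ_Tyz: "isoZ mTyz" by (rule isoZ_intro[where B=mTyz]) (simp_all add: isom3_def mdefs)
lemma isoZ_Tzx: "isoZ mTzx" by (rule isoZ_intro[where B=mTzx]) (simp_all add: isom3_def mdefs)
lemma isoZ_NEG: "isoZ mNEG" by (rule isoZ_intro[where B=mNEG]) (simp_all add: isom3_def mdefs)
lemma isoZ_Rx: "isoZ mRx" by (rule isoZ_intro[where B=mRx]) (simp_all add: isom3_def mdefs)
lemma isoZ_Ry: "isoZ mRy" by (rule isoZ_intro[where B=mRy]) (simp_all add: isom3_def mdefs)
lemma isoZ_Rz: "isoZ mRz" by (rule isoZ_intro[where B=mRz]) (simp_all add: isom3_def mdefs)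
lemma isoZ_I3: "isoZ I3" by (rule isoZ_intro[where B=I3]) (simp_all add: isom3_def mdefs)

lemmas isoZs = isoZ_G1 isoZ_G2 isoZ_G3 isoZ_G1i isoZ_G2i isoZ_G3i isoZ_Txy isoZ_Tyz isoZ_Tzx isoZ_NEG
  isoZ_Rx isoZ_Ry isoZ_Rz isoZ_I3

lemma invG1: "inv\<^bsub>BijGroup sl2\<^esub> (Lmap mG1 :: 'a::field_char_0 m2 \<Rightarrow> _) = Lmap mG1i"
  by (rule Lmap_inv[OF isoZ_G1]) (simp_all add: mdefs)
lemma invG2: "inv\<^bsub>BijGroup sl2\<^esub> (Lmap mG2 :: 'a::field_char_0 m2 \<Rightarrow> _) = Lmap mG2i"
  by (rule Lmap_inv[OF isoZ_G2]) (simp_all add: mdefs)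
lemma invG3: "inv\<^bsub>BijGroup sl2\<^esub> (Lmap mG3 :: 'a::field_char_0 m2 \<Rightarrow> _) = Lmap mG3i"
  by (rule Lmap_inv[OF isoZ_G3]) (simp_all add: mdefs)
lemma invTxy: "inv\<^bsub>BijGroup sl2\<^esub> (Lmap mTxy :: 'a::field_char_0 m2 \<Rightarrow> _) = Lmap mTxy"
  by (rule Lmap_inv[OF isoZ_Txy]) (simp_all add: mdefs)
lemma invTyz: "inv\<^bsub>BijGroup sl2\<^esub> (Lmap mTyz :: 'a::field_char_0 m2 \<Rightarrow> _) = Lmap mTyz"
  by (rule Lmap_inv[OF isoZ_Tyz]) (simp_all add: mdefs)
lemma invNEG: "inv\<^bsub>BijGroup sl2\<^esub> (Lmap mNEG :: 'a::field_char_0 m2 \<Rightarrow> _) = Lmap mNEG"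
  by (rule Lmap_inv[OF isoZ_NEG]) (simp_all add: mdefs)

definition Tgen :: "('a::field_char_0 m2 \<Rightarrow> 'a m2) set" where
  "Tgen = {Lmap mNEG, Lmap mTxy, Lmap mTyz, Lmap mG1, Lmap mG2, Lmap mG3}"
definition Ogrp :: "('a::field_char_0 m2 \<Rightarrow> 'a m2) set" where
  "Ogrp = generate (BijGroup sl2) Tgen"

lemma Tgen_carrier: "Tgen \<subseteq> carrier (BijGroup (sl2::'a::field_char_0 m2 set))"
  by (auto simp: Tgen_def intro: Lmap_carrier isoZs)

lemma Ogrp_carrier: "(Ogrp :: ('a::field_char_0 m2 \<Rightarrow> 'a m2) set) \<subseteq> carrier (BijGroup sl2)"
  unfolding Ogrp_def by (rule group.generate_incl[OF grpBG Tgen_carrier])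

lemma Ogrp_sub: "subgroup (Ogrp :: ('a::field_char_0 m2 \<Rightarrow> 'a m2) set) (BijGroup sl2)"
  unfolding Ogrp_def by (rule group.generate_is_subgroup[OF grpBG Tgen_carrier])

lemma O_incl: "f \<in> Tgen \<Longrightarrow> f \<in> Ogrp" by (simp add: Ogrp_def generate.incl)
lemma O_mult: "f \<in> Ogrp \<Longrightarrow> g \<in> Ogrp \<Longrightarrow> f \<otimes>\<^bsub>BijGroup sl2\<^esub> g \<in> (Ogrp :: ('a::field_char_0 m2 \<Rightarrow> 'a m2) set)"
  by (simp add: Ogrp_def generate.eng)
lemma O_inv: "f \<in> Ogrp \<Longrightarrow> inv\<^bsub>BijGroup sl2\<^esub> f \<in> (Ogrp :: ('a::field_char_0 m2 \<Rightarrow> 'a m2) set)"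
  unfolding Ogrp_def by (rule group.generate_m_inv_closed[OF grpBG Tgen_carrier])

lemma O_Lmap_mult: "(Lmap A :: 'a::field_char_0 m2 \<Rightarrow> _) \<in> Ogrp \<Longrightarrow> (Lmap B :: 'a m2 \<Rightarrow> _) \<in> Ogrp \<Longrightarrow> (Lmap (mmul A B) :: 'a m2 \<Rightarrow> _) \<in> Ogrp"
proof -
  assume a: "(Lmap A :: 'a m2 \<Rightarrow> _) \<in> Ogrp" and b: "(Lmap B :: 'a m2 \<Rightarrow> _) \<in> Ogrp"
  have "(Lmap A :: 'a m2 \<Rightarrow> _) \<in> carrier (BijGroup sl2)" "(Lmap B :: 'a m2 \<Rightarrow> _) \<in> carrier (BijGroup sl2)"
    using a b Ogrp_carrier by blast+
  then have "(Lmap (mmul A B) :: 'a m2 \<Rightarrow> _) = Lmap A \<otimes>\<^bsub>BijGroup sl2\<^esub> Lmap B" by (simp add: Lmap_mult)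
  then show ?thesis using O_mult[OF a b] by simp
qed

lemma O_NEG: "(Lmap mNEG :: 'a::field_char_0 m2 \<Rightarrow> _) \<in> Ogrp" by (rule O_incl) (simp add: Tgen_def)
lemma O_Txy: "(Lmap mTxy :: 'a::field_char_0 m2 \<Rightarrow> _) \<in> Ogrp" by (rule O_incl) (simp add: Tgen_def)
lemma O_Tyz: "(Lmap mTyz :: 'a::field_char_0 m2 \<Rightarrow> _) \<in> Ogrp" by (rule O_incl) (simp add: Tgen_def)
lemma O_G1: "(Lmap mG1 :: 'a::field_char_0 m2 \<Rightarrow> _) \<in> Ogrp" by (rule O_incl) (simp add: Tgen_def)
lemma O_G2: "(Lmap mG2 :: 'a::field_char_0 m2 \<Rightarrow> _) \<in> Ogrp" by (rule O_incl) (simp add: Tgen_def)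
lemma O_G3: "(Lmap mG3 :: 'a::field_char_0 m2 \<Rightarrow> _) \<in> Ogrp" by (rule O_incl) (simp add: Tgen_def)
lemma O_G3i: "(Lmap mG3i :: 'a::field_char_0 m2 \<Rightarrow> _) \<in> Ogrp" using O_inv[OF O_G3] by (simp add: invG3)
lemma O_I3: "(Lmap I3 :: 'a::field_char_0 m2 \<Rightarrow> _) \<in> Ogrp" by (simp add: Ogrp_def Lmap_one[symmetric] generate.one)

lemma O_Rx: "(Lmap mRx :: 'a::field_char_0 m2 \<Rightarrow> _) \<in> Ogrp"
proof -
  have "mRx = mmul mTxy mG3i" by (simp add: mdefs)
  then show ?thesis using O_Lmap_mult[OF O_Txy O_G3i] by simp
qed
lemma O_Ry: "(Lmap mRy :: 'a::field_char_0 m2 \<Rightarrow> _) \<in> Ogrp"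
proof -
  have "mRy = mmul mTxy mG3" by (simp add: mdefs)
  then show ?thesis using O_Lmap_mult[OF O_Txy O_G3] by simp
qed
lemma O_Rz: "(Lmap mRz :: 'a::field_char_0 m2 \<Rightarrow> _) \<in> Ogrp"
proof -
  have "mRz = mmul mTyz mG1" by (simp add: mdefs)
  then show ?thesis using O_Lmap_mult[OF O_Tyz O_G1] by simp
qed

lemma mv_col: "mv A (V3 1 0 0) = col1 A" "mv A (V3 0 1 0) = col2 A" "mv A (V3 0 0 1) = col3 A"
  by (cases A; simp)+

lemma Bf_norm: "Bf (V3 a b c) (V3 a b c) = 2 * ((a::int)^2+b^2+c^2-2*a*b-2*a*c-2*b*c)"
  by (simp add: power2_eq_square algebra_simps)

lemma perm_cases:
  assumes i: "isom3 A" and r: "mv A (V3 1 1 1) = (V3 1 1 1 :: int v3)"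
  shows "A \<in> {I3, mTxy, mTyz, mTzx, mmul mTxy mTyz, mmul mTyz mTxy}"
proof -
  have k: "\<And>s t. Bf (mv A s) (mv A t) = Bf s (t :: int v3)" by (rule isom3_Bf[OF i])
  have u: "Bf (col1 A) (V3 1 1 1) = -2" "Bf (col2 A) (V3 1 1 1) = -2" "Bf (col3 A) (V3 1 1 1) = -2"
    using k[of "V3 1 0 0" "V3 1 1 1"] k[of "V3 0 1 0" "V3 1 1 1"] k[of "V3 0 0 1" "V3 1 1 1"]
    by (simp_all add: r mv_col)
  obtain a b c d e f g h j where A: "A = M3 a b c d e f g h j" by (cases A)
  have s: "a+d+g = 1" "b+e+h = 1" "c+f+j = 1" using u by (simp_all add: A)
  have n: "Bf (V3 a d g) (V3 a d g) = 2" "Bf (V3 b e h) (V3 b e h) = 2" "Bf (V3 c f j) (V3 c f j) = 2"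
    "Bf (V3 a d g) (V3 b e h) = -2" "Bf (V3 a d g) (V3 c f j) = -2" "Bf (V3 b e h) (V3 c f j) = -2"
    using i by (simp_all add: isom3_def A)
  have c1: "(a = 1 \<and> d = 0 \<and> g = 0) \<or> (a = 0 \<and> d = 1 \<and> g = 0) \<or> (a = 0 \<and> d = 0 \<and> g = 1)"
    by (rule unitvec) (use n(1) s(1) in \<open>simp_all only: Bf_norm\<close>, simp_all)
  have c2: "(b = 1 \<and> e = 0 \<and> h = 0) \<or> (b = 0 \<and> e = 1 \<and> h = 0) \<or> (b = 0 \<and> e = 0 \<and> h = 1)"
    by (rule unitvec) (use n(2) s(2) in \<open>simp_all only: Bf_norm\<close>, simp_all)
  have c3: "(c = 1 \<and> f = 0 \<and> j = 0) \<or> (c = 0 \<and> f = 1 \<and> j = 0) \<or> (c = 0 \<and> f = 0 \<and> j = 1)"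
    by (rule unitvec) (use n(3) s(3) in \<open>simp_all only: Bf_norm\<close>, simp_all)
  show ?thesis using c1 c2 c3 n(4-6) unfolding A by (elim disjE conjE; simp add: mdefs)
qed

lemma O_perm: "isom3 A \<Longrightarrow> mv A (V3 1 1 1) = (V3 1 1 1 :: int v3) \<Longrightarrow> (Lmap A :: 'a::field_char_0 m2 \<Rightarrow> _) \<in> Ogrp"
proof -
  assume "isom3 A" "mv A (V3 1 1 1) = (V3 1 1 1 :: int v3)"
  then have A: "A \<in> {I3, mTxy, mTyz, mTzx, mmul mTxy mTyz, mmul mTyz mTxy}" by (rule perm_cases)
  have zx: "mTzx = mmul mTxy (mmul mTyz mTxy)" by (simp add: mdefs)
  show ?thesis using A O_I3 O_Txy O_Tyz O_Lmap_mult[OF O_Txy O_Tyz] O_Lmap_mult[OF O_Tyz O_Txy]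
      O_Lmap_mult[OF O_Txy O_Lmap_mult[OF O_Tyz O_Txy]]
    by (auto simp: zx)
qed



lemma pos_of_prod: "0 < (a::int)*b \<Longrightarrow> 0 < b \<Longrightarrow> 0 < a"
  by (simp add: zero_less_mult_iff)

lemma norm_r: "isom3 A \<Longrightarrow> mv A (V3 1 1 1) = V3 a b c \<Longrightarrow> (a::int)^2+b^2+c^2-2*a*b-2*a*c-2*b*c = -3"
proof -
  assume i: "isom3 A" and r: "mv A (V3 1 1 1) = V3 a b c"
  have "Bf (mv A (V3 1 1 1)) (mv A (V3 1 1 1)) = (Bf (V3 1 1 1) (V3 1 1 1) :: int)" by (rule isom3_Bf[OF i])
  then show ?thesis unfolding r Bf_norm by simp
qed

lemma descent_aux:
  "\<forall>A a b c. isom3 A \<and> mv A (V3 1 1 1) = V3 a b c \<and> b > 0 \<and> nat (a+b+c) = n \<longrightarrow>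
     (Lmap A :: 'a::field_char_0 m2 \<Rightarrow> _) \<in> Ogrp"
proof (induction n rule: less_induct)
  case (less n)
  show ?case
  proof (intro allI impI, elim conjE)
    fix A a b c
    assume i: "isom3 A" and r: "mv A (V3 1 1 1) = V3 a b c" and b: "b > 0" and n: "nat (a+b+c) = n"
    have nm: "a^2+b^2+c^2-2*a*b-2*a*c-2*b*c = -3" by (rule norm_r[OF i r])
    have a: "a > 0" using same_sign(1)[OF nm] b by (simp add: zero_less_mult_iff)
    have c: "c > 0" using same_sign(2)[OF nm] b by (simp add: zero_less_mult_iff)
    have bk: "\<And>R. (Lmap (mmul R A) :: 'a m2 \<Rightarrow> _) \<in> Ogrp \<Longrightarrow> mmul R R = I3 \<Longrightarrow> (Lmap R :: 'a m2 \<Rightarrow> _) \<in> Ogrp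
        \<Longrightarrow> (Lmap A :: 'a m2 \<Rightarrow> _) \<in> Ogrp"
      by (metis O_Lmap_mult mmul_assoc mmul_I3(1))
    show "(Lmap A :: 'a m2 \<Rightarrow> _) \<in> Ogrp"
    proof (cases "a > b + c")
      case True
      let ?A = "mmul mRx A"
      have i': "isom3 ?A" using i isoZ_Rx by (auto simp: isoZ_def intro: isom3_mmul)
      have r': "mv ?A (V3 1 1 1) = V3 (2*b+2*c-a) b c" by (simp add: mv_mmul r mRx_def algebra_simps)
      have "(Lmap ?A :: 'a m2 \<Rightarrow> _) \<in> Ogrp"
        using less.IH[of "nat ((2*b+2*c-a)+b+c)"] i' r' b n True a c by auto
      then show ?thesis by (rule bk[OF _ _ O_Rx]) (simp add: mdefs)
    next
      case F1: False
      show ?thesis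
      proof (cases "b > a + c")
        case True
        let ?A = "mmul mRy A"
        have i': "isom3 ?A" using i isoZ_Ry by (auto simp: isoZ_def intro: isom3_mmul)
        have r': "mv ?A (V3 1 1 1) = V3 a (2*a+2*c-b) c" by (simp add: mv_mmul r mRy_def algebra_simps)
        have "(2*a+2*c-b) * c > 0" using same_sign(2)[OF norm_r[OF i' r']] .
        then have b': "2*a+2*c-b > 0" using c by (simp add: zero_less_mult_iff)
        have "(Lmap ?A :: 'a m2 \<Rightarrow> _) \<in> Ogrp"
          using less.IH[of "nat (a+(2*a+2*c-b)+c)"] i' r' b' n True a c by auto
        then show ?thesis by (rule bk[OF _ _ O_Ry]) (simp add: mdefs)
      next
        case F2: False
        show ?thesis
        proof (cases "c > a + b")
          case True
          let ?A = "mmul mRz A"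
          have i': "isom3 ?A" using i isoZ_Rz by (auto simp: isoZ_def intro: isom3_mmul)
          have r': "mv ?A (V3 1 1 1) = V3 a b (2*a+2*b-c)" by (simp add: mv_mmul r mRz_def algebra_simps)
          have "(Lmap ?A :: 'a m2 \<Rightarrow> _) \<in> Ogrp"
            using less.IH[of "nat (a+b+(2*a+2*b-c))"] i' r' b n True a c by auto
          then show ?thesis by (rule bk[OF _ _ O_Rz]) (simp add: mdefs)
        next
          case False
          have "a = 1 \<and> b = 1 \<and> c = 1" using chamber[OF nm a b c] F1 F2 False by simp
          then show ?thesis using O_perm[OF i] r by simp
        qed
      qed
    qed
  qed
qed

lemma descent: "isom3 A \<Longrightarrow> mv A (V3 1 1 1) = V3 a b (c::int) \<Longrightarrow> b > 0 \<Longrightarrow> (Lmap A :: 'a::field_char_0 m2 \<Rightarrow> _) \<in> Ogrp"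
  using descent_aux by blast

lemma IsomZ_O: "(f :: 'a::field_char_0 m2 \<Rightarrow> _) \<in> IsomZ \<Longrightarrow> f \<in> Ogrp"
proof -
  assume "f \<in> IsomZ"
  then obtain A where i: "isom3 A" and f: "f = Lmap A" using IsomZ_Lmap by blast
  obtain a b c where r: "mv A (V3 1 1 1) = V3 a b (c::int)" by (cases "mv A (V3 1 1 1) :: int v3") auto
  have "b * c > 0" using same_sign(2)[OF norm_r[OF i r]] .
  then have "b \<noteq> 0" by auto
  show ?thesis
  proof (cases "b > 0")
    case True then show ?thesis using descent[OF i r] f by simp
  next
    case False
    then have b: "-b > 0" using \<open>b \<noteq> 0\<close> by simp
    let ?A = "mmul mNEG A"
    have i': "isom3 ?A" using i isoZ_NEG by (auto simp: isoZ_def intro: isom3_mmul)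
    have r': "mv ?A (V3 1 1 1) = V3 (-a) (-b) (-c)" by (simp add: mv_mmul r mNEG_def)
    have "(Lmap ?A :: 'a m2 \<Rightarrow> _) \<in> Ogrp" by (rule descent[OF i' r' b])
    then have "(Lmap (mmul mNEG ?A) :: 'a m2 \<Rightarrow> _) \<in> Ogrp" by (rule O_Lmap_mult[OF O_NEG])
    moreover have "mmul mNEG ?A = A" by (simp add: mmul_assoc[symmetric], simp add: mdefs mmul_I3[unfolded I3_def])
    ultimately show ?thesis using f by simp
  qed
qed

definition Sset :: "('a::field_char_0 m2 \<Rightarrow> 'a m2) set" where
  "Sset = Lmap ` {A. isoZ A}"

lemma Sset_sub: "subgroup (Sset :: ('a::field_char_0 m2 \<Rightarrow> 'a m2) set) (BijGroup sl2)"
proof (rule group.subgroupI[OF grpBG])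
  show "(Sset :: ('a m2 \<Rightarrow> 'a m2) set) \<subseteq> carrier (BijGroup sl2)"
    by (auto simp: Sset_def intro: Lmap_carrier)
  show "(Sset :: ('a m2 \<Rightarrow> 'a m2) set) \<noteq> {}" using isoZ_I3 by (auto simp: Sset_def)
  fix f g :: "'a m2 \<Rightarrow> 'a m2"
  assume f: "f \<in> Sset"
  then obtain A where A: "isoZ A" and fA: "f = Lmap A" by (auto simp: Sset_def)
  then obtain B where ab: "mmul A B = I3" and ba: "mmul B A = I3" by (auto simp: isoZ_def)
  have "inv\<^bsub>BijGroup sl2\<^esub> f = Lmap B" using Lmap_inv[OF A ab ba] fA by simp
  then show "inv\<^bsub>BijGroup sl2\<^esub> f \<in> Sset" using isoZ_inv[OF A ab ba] by (auto simp: Sset_def)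
  assume "g \<in> Sset"
  then obtain C where C: "isoZ C" and gC: "g = Lmap C" by (auto simp: Sset_def)
  have "f \<otimes>\<^bsub>BijGroup sl2\<^esub> g = Lmap (mmul A C)"
    using Lmap_mult[OF Lmap_carrier[OF A] Lmap_carrier[OF C]] fA gC by simp
  then show "f \<otimes>\<^bsub>BijGroup sl2\<^esub> g \<in> Sset" using isoZ_mmul[OF A C] by (auto simp: Sset_def)
qed

lemma Tgen_S: "Tgen \<subseteq> (Sset :: ('a::field_char_0 m2 \<Rightarrow> 'a m2) set)"
  using isoZs by (auto simp: Tgen_def Sset_def)

lemma O_S: "(Ogrp :: ('a::field_char_0 m2 \<Rightarrow> 'a m2) set) \<subseteq> Sset"
  unfolding Ogrp_def by (rule group.generate_subgroup_incl[OF grpBG Tgen_S Sset_sub])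

lemma S_IsomZ: "(Sset :: ('a::field_char_0 m2 \<Rightarrow> 'a m2) set) \<subseteq> IsomZ"
  by (auto simp: Sset_def intro: Lmap_IsomZ)

lemma IsomZ_eq: "(IsomZ :: ('a::field_char_0 m2 \<Rightarrow> 'a m2) set) = Ogrp"
  using IsomZ_O O_S S_IsomZ by blast

lemma IsomZ_S: "(IsomZ :: ('a::field_char_0 m2 \<Rightarrow> 'a m2) set) = Sset"
  using IsomZ_O O_S S_IsomZ by blast

lemma IsomZ_sub: "subgroup (IsomZ :: ('a::field_char_0 m2 \<Rightarrow> 'a m2) set) (BijGroup sl2)"
  unfolding IsomZ_eq by (rule Ogrp_sub)



lemma (in group) conj_gen:
  assumes gens: "A \<subseteq> carrier G" and t: "t \<in> carrier G"
    and h: "\<And>h. h \<in> A \<Longrightarrow> t \<otimes> h \<otimes> inv t \<in> generate G A"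
  shows "g \<in> generate G A \<Longrightarrow> t \<otimes> g \<otimes> inv t \<in> generate G A"
proof (induction g rule: generate.induct)
  case one then show ?case using t by (simp add: generate.one)
next
  case (incl h) then show ?case by (rule h)
next
  case (inv h)
  have hc: "h \<in> carrier G" using inv gens by auto
  have "t \<otimes> inv h \<otimes> inv t = inv (t \<otimes> h \<otimes> inv t)"
    using t hc by (simp add: inv_mult_group m_assoc)
  then show ?case using generate_m_inv_closed[OF gens h[OF inv]] by simp
next
  case (eng h1 h2)
  have c: "h1 \<in> carrier G" "h2 \<in> carrier G" using eng generate_in_carrier[OF gens] by auto
  have "t \<otimes> (h1 \<otimes> h2) \<otimes> inv t = (t \<otimes> h1 \<otimes> inv t) \<otimes> (t \<otimes> h2 \<otimes> inv t)"
    using t c by (simp add: m_assoc inv_solve_left)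
  then show ?case using generate.eng[OF eng.IH] by simp
qed

lemma (in group) normal_gen:
  assumes gens: "B \<subseteq> carrier G" and N: "subgroup N G"
    and h: "\<And>t g. t \<in> B \<Longrightarrow> g \<in> N \<Longrightarrow> t \<otimes> g \<otimes> inv t \<in> N \<and> inv t \<otimes> g \<otimes> t \<in> N"
  shows "k \<in> generate G B \<Longrightarrow> (\<forall>g\<in>N. k \<otimes> g \<otimes> inv k \<in> N)"
proof (induction k rule: generate.induct)
  case one then show ?case using subgroup.subset[OF N] by auto
next
  case (incl t) then show ?case using h by blast
next
  case (inv t) then show ?case using h gens by auto
next
  case (eng k1 k2)
  have c: "k1 \<in> carrier G" "k2 \<in> carrier G" using eng generate_in_carrier[OF gens] by auto
  show ?case
  proof
    fix g assume g: "g \<in> N"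
    then have gc: "g \<in> carrier G" using subgroup.subset[OF N] by auto
    have "k1 \<otimes> k2 \<otimes> g \<otimes> inv (k1 \<otimes> k2) = k1 \<otimes> (k2 \<otimes> g \<otimes> inv k2) \<otimes> inv k1"
      using c gc by (simp add: m_assoc inv_mult_group)
    then show "k1 \<otimes> k2 \<otimes> g \<otimes> inv (k1 \<otimes> k2) \<in> N" using eng.IH g by auto
  qed
qed

definition gensG :: "('a::field_char_0 m2 \<Rightarrow> 'a m2) set" where
  "gensG = {Lmap mG1, Lmap mG2, Lmap mG3}"

lemma Ggrp_eq: "Ggrp = generate (BijGroup sl2) (gensG :: ('a::field_char_0 m2 \<Rightarrow> 'a m2) set)"
  by (simp add: Ggrp_def gensG_def expG1 expG2 expG3)

lemma gensG_carrier: "gensG \<subseteq> carrier (BijGroup (sl2 :: 'a::field_char_0 m2 set))"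
  using isoZs by (auto simp: gensG_def intro: Lmap_carrier)

lemma Ggrp_sub: "subgroup (Ggrp :: ('a::field_char_0 m2 \<Rightarrow> 'a m2) set) (BijGroup sl2)"
  unfolding Ggrp_eq by (rule group.generate_is_subgroup[OF grpBG gensG_carrier])

lemma gensG_O: "gensG \<subseteq> (Ogrp :: ('a::field_char_0 m2 \<Rightarrow> 'a m2) set)"
  using O_G1 O_G2 O_G3 by (auto simp: gensG_def)

lemma Ggrp_O: "(Ggrp :: ('a::field_char_0 m2 \<Rightarrow> 'a m2) set) \<subseteq> Ogrp"
  unfolding Ggrp_eq by (rule group.generate_subgroup_incl[OF grpBG gensG_O Ogrp_sub])

lemma Ggrp_IsomZ: "(Ggrp :: ('a::field_char_0 m2 \<Rightarrow> 'a m2) set) \<subseteq> IsomZ"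
  using Ggrp_O IsomZ_eq by blast

lemma G_G1: "(Lmap mG1 :: 'a::field_char_0 m2 \<Rightarrow> _) \<in> Ggrp" by (simp add: Ggrp_eq gensG_def generate.incl)
lemma G_G2: "(Lmap mG2 :: 'a::field_char_0 m2 \<Rightarrow> _) \<in> Ggrp" by (simp add: Ggrp_eq gensG_def generate.incl)
lemma G_G3: "(Lmap mG3 :: 'a::field_char_0 m2 \<Rightarrow> _) \<in> Ggrp" by (simp add: Ggrp_eq gensG_def generate.incl)
lemma G_G1i: "(Lmap mG1i :: 'a::field_char_0 m2 \<Rightarrow> _) \<in> Ggrp"
  using generate.inv[of "Lmap mG1" gensG "BijGroup sl2"] by (simp add: Ggrp_eq gensG_def invG1)
lemma G_G2i: "(Lmap mG2i :: 'a::field_char_0 m2 \<Rightarrow> _) \<in> Ggrp"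
  using generate.inv[of "Lmap mG2" gensG "BijGroup sl2"] by (simp add: Ggrp_eq gensG_def invG2)
lemma G_G3i: "(Lmap mG3i :: 'a::field_char_0 m2 \<Rightarrow> _) \<in> Ggrp"
  using generate.inv[of "Lmap mG3" gensG "BijGroup sl2"] by (simp add: Ggrp_eq gensG_def invG3)

lemma G_Lmap_mult: "(Lmap A :: 'a::field_char_0 m2 \<Rightarrow> _) \<in> Ggrp \<Longrightarrow> (Lmap B :: 'a m2 \<Rightarrow> _) \<in> Ggrp \<Longrightarrow> (Lmap (mmul A B) :: 'a m2 \<Rightarrow> _) \<in> Ggrp"
proof -
  assume a: "(Lmap A :: 'a m2 \<Rightarrow> _) \<in> Ggrp" and b: "(Lmap B :: 'a m2 \<Rightarrow> _) \<in> Ggrp"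
  have "(Lmap A :: 'a m2 \<Rightarrow> _) \<in> carrier (BijGroup sl2)" "(Lmap B :: 'a m2 \<Rightarrow> _) \<in> carrier (BijGroup sl2)"
    using a b subgroup.subset[OF Ggrp_sub] by blast+
  then have "(Lmap (mmul A B) :: 'a m2 \<Rightarrow> _) = Lmap A \<otimes>\<^bsub>BijGroup sl2\<^esub> Lmap B" by (simp add: Lmap_mult)
  then show ?thesis using subgroup.m_closed[OF Ggrp_sub a b] by simp
qed

lemma Lmap_mult3: "isoZ A \<Longrightarrow> isoZ B \<Longrightarrow> isoZ C \<Longrightarrow>
  (Lmap A :: 'a::field_char_0 m2 \<Rightarrow> _) \<otimes>\<^bsub>BijGroup sl2\<^esub> Lmap B \<otimes>\<^bsub>BijGroup sl2\<^esub> Lmap C = Lmap (mmul (mmul A B) C)"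
  by (simp add: Lmap_mult Lmap_carrier isoZ_mmul)

lemma conj_T:
  assumes "t \<in> {mNEG, mTxy, mTyz}" "h \<in> {mG1, mG2, mG3}"
  shows "(Lmap t :: 'a::field_char_0 m2 \<Rightarrow> _) \<otimes>\<^bsub>BijGroup sl2\<^esub> Lmap h \<otimes>\<^bsub>BijGroup sl2\<^esub> inv\<^bsub>BijGroup sl2\<^esub> Lmap t \<in> Ggrp"
proof -
  have inv: "inv\<^bsub>BijGroup sl2\<^esub> (Lmap t :: 'a m2 \<Rightarrow> _) = Lmap t" using assms(1) invNEG invTxy invTyz by auto
  have "isoZ t" "isoZ h" using assms isoZs by auto
  then have e: "(Lmap t :: 'a m2 \<Rightarrow> _) \<otimes>\<^bsub>BijGroup sl2\<^esub> Lmap h \<otimes>\<^bsub>BijGroup sl2\<^esub> inv\<^bsub>BijGroup sl2\<^esub> Lmap t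
     = Lmap (mmul (mmul t h) t)" by (simp add: inv Lmap_mult3)
  have "mmul (mmul t h) t \<in> {mG1, mG2, mG3, mG1i, mG2i, mG3i}" using assms by (auto simp: mdefs)
  then show ?thesis unfolding e using G_G1 G_G2 G_G3 G_G1i G_G2i G_G3i by auto
qed

lemma normal_O: "k \<in> Ogrp \<Longrightarrow> g \<in> Ggrp \<Longrightarrow>
   k \<otimes>\<^bsub>BijGroup sl2\<^esub> g \<otimes>\<^bsub>BijGroup sl2\<^esub> inv\<^bsub>BijGroup sl2\<^esub> k \<in> (Ggrp :: ('a::field_char_0 m2 \<Rightarrow> 'a m2) set)"
proof -
  assume k: "k \<in> Ogrp" and g: "g \<in> Ggrp"
  have GG: "group (BijGroup (sl2 :: 'a m2 set))" by (rule grpBG)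
  have step: "t \<otimes>\<^bsub>BijGroup sl2\<^esub> g \<otimes>\<^bsub>BijGroup sl2\<^esub> inv\<^bsub>BijGroup sl2\<^esub> t \<in> (Ggrp :: ('a m2 \<Rightarrow> 'a m2) set)
     \<and> inv\<^bsub>BijGroup sl2\<^esub> t \<otimes>\<^bsub>BijGroup sl2\<^esub> g \<otimes>\<^bsub>BijGroup sl2\<^esub> t \<in> Ggrp"
    if t: "t \<in> Tgen" and g: "g \<in> Ggrp" for t g
  proof (cases "t \<in> gensG")
    case True
    then have tG: "t \<in> Ggrp" and ti: "inv\<^bsub>BijGroup sl2\<^esub> t \<in> Ggrp" unfolding Ggrp_eq
      by (auto intro: generate.incl generate.inv)
    show ?thesis using subgroup.m_closed[OF Ggrp_sub] tG ti g by blast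
  next
    case False
    then obtain m where m: "m \<in> {mNEG, mTxy, mTyz}" and tm: "t = Lmap m" using t by (auto simp: Tgen_def gensG_def)
    have inv: "inv\<^bsub>BijGroup sl2\<^esub> (Lmap m :: 'a m2 \<Rightarrow> _) = Lmap m" using m invNEG invTxy invTyz by auto
    have c: "(Lmap m :: 'a m2 \<Rightarrow> _) \<in> carrier (BijGroup sl2)" using m isoZs Lmap_carrier by auto
    have "(Lmap m :: 'a m2 \<Rightarrow> _) \<otimes>\<^bsub>BijGroup sl2\<^esub> g \<otimes>\<^bsub>BijGroup sl2\<^esub> inv\<^bsub>BijGroup sl2\<^esub> Lmap m \<in> Ggrp"
      using group.conj_gen[OF GG gensG_carrier c, of g] g conj_T[OF m] unfolding Ggrp_eq
      by (auto simp: gensG_def)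
    then show ?thesis using tm inv by simp
  qed
  show ?thesis
    using group.normal_gen[OF GG Tgen_carrier Ggrp_sub step, of k] k g by (simp add: Ogrp_def)
qed



lemma negmap_Lmap: "(negmap :: 'a::field_char_0 m2 \<Rightarrow> _) = Lmap mNEG"
proof (rule ext)
  fix X :: "'a m2"
  show "negmap X = Lmap mNEG X"
  proof (cases "X \<in> sl2")
    case True
    then obtain a b c where "X = Wv (V3 a b c)" by (metis Wv_crd v3.exhaust)
    then show ?thesis by (simp add: negmap_def) (simp add: mNEG_def Wv_V3)
  next
    case False then show ?thesis by (simp add: negmap_def Lmap_def)
  qed
qed

lemma e_ofi: "ex = Wv (ofi (V3 1 0 0))" "ey = Wv (ofi (V3 0 1 0))" "ez = Wv (ofi (V3 0 0 1))"
  by (simp_all add: ex_Wv ey_Wv ez_Wv)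

lemma transp_eq:
  assumes "mkcols cu cv cw = M" and "u \<in> {ex, ey, ez}" and "v \<in> {ex,ey,ez}" and "w \<in> {ex,ey,ez}"
    and P: "(Lmap M :: 'a::field_char_0 m2 \<Rightarrow> _) u = v" "(Lmap M :: 'a m2 \<Rightarrow> _) v = u" "(Lmap M :: 'a m2 \<Rightarrow> _) w = w"
    and U: "\<And>f. sl2_linear f \<Longrightarrow> f u = v \<Longrightarrow> f v = u \<Longrightarrow> f w = w \<Longrightarrow>
       f ex = Wv (ofi cu) \<and> f ey = Wv (ofi cv) \<and> (f ez :: 'a m2) = Wv (ofi cw)"
  shows "transp u v w = (Lmap M :: 'a m2 \<Rightarrow> _)"
  unfolding transp_def
proof (rule the_equality)
  show "Lmap M \<in> extensional sl2 \<and> sl2_linear (Lmap M :: 'a m2 \<Rightarrow> _) \<and> Lmap M u = v \<and> Lmap M v = u \<and> Lmap M w = w"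
    using P Lmap_ext Lmap_linear by auto
  fix f :: "'a m2 \<Rightarrow> 'a m2"
  assume "f \<in> extensional sl2 \<and> sl2_linear f \<and> f u = v \<and> f v = u \<and> f w = w"
  then have f: "f \<in> extensional sl2" "sl2_linear f" "f u = v" "f v = u" "f w = w" by auto
  from U[OF f(2-5)] have "f ex = Wv (ofi cu)" "f ey = Wv (ofi cv)" "f ez = Wv (ofi cw)" by auto
  from lin_basis[OF f(2,1) this] show "f = Lmap M" using assms(1) by simp
qed

lemma transp_xy: "transp ex ey ez = (Lmap mTxy :: 'a::field_char_0 m2 \<Rightarrow> _)"
  by (rule transp_eq[where cu="V3 0 1 0" and cv="V3 1 0 0" and cw="V3 0 0 1"])
     (auto simp: mTxy_def ex_Wv ey_Wv ez_Wv)
lemma transp_yz: "transp ey ez ex = (Lmap mTyz :: 'a::field_char_0 m2 \<Rightarrow> _)"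
  by (rule transp_eq[where cu="V3 1 0 0" and cv="V3 0 0 1" and cw="V3 0 1 0"])
     (auto simp: mTyz_def ex_Wv ey_Wv ez_Wv)
lemma transp_zx: "transp ez ex ey = (Lmap mTzx :: 'a::field_char_0 m2 \<Rightarrow> _)"
  by (rule transp_eq[where cu="V3 0 0 1" and cv="V3 0 1 0" and cw="V3 1 0 0"])
     (auto simp: mTzx_def ex_Wv ey_Wv ez_Wv)

lemma invTzx: "inv\<^bsub>BijGroup sl2\<^esub> (Lmap mTzx :: 'a::field_char_0 m2 \<Rightarrow> _) = Lmap mTzx"
  by (rule Lmap_inv[OF isoZ_Tzx]) (simp_all add: mdefs)

definition K4 :: "mat3 \<Rightarrow> mat3 set" where "K4 T = {I3, T, mNEG, mmul T mNEG}"

lemma K4_closed: "T \<in> {mTxy, mTyz, mTzx} \<Longrightarrow> X \<in> K4 T \<Longrightarrow> Y \<in> K4 T \<Longrightarrow> mmul X Y \<in> K4 T"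
  by (auto simp: K4_def mdefs)

lemma K4_isoZ: "T \<in> {mTxy, mTyz, mTzx} \<Longrightarrow> X \<in> K4 T \<Longrightarrow> isoZ X"
  using isoZs by (auto simp: K4_def intro: isoZ_mmul)

lemma Hgrp_eq:
  assumes T: "T \<in> {mTxy, mTyz, mTzx}" and tr: "transp u v w = (Lmap T :: 'a::field_char_0 m2 \<Rightarrow> _)"
  shows "Hgrp u v w = (Lmap ` K4 T :: ('a m2 \<Rightarrow> _) set)"
proof
  have invT: "inv\<^bsub>BijGroup sl2\<^esub> (Lmap T :: 'a m2 \<Rightarrow> _) = Lmap T" using T invTxy invTyz invTzx by auto
  have TK: "T \<in> K4 T" "mNEG \<in> K4 T" by (auto simp: K4_def)
  show "Hgrp u v w \<subseteq> (Lmap ` K4 T :: ('a m2 \<Rightarrow> _) set)"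
  proof
    fix x assume "x \<in> Hgrp u v w"
    then have "x \<in> generate (BijGroup sl2) {Lmap T, Lmap mNEG}" by (simp add: Hgrp_def tr negmap_Lmap)
    then show "x \<in> (Lmap ` K4 T :: ('a m2 \<Rightarrow> _) set)"
    proof (induction x rule: generate.induct)
      case one then show ?case by (auto simp: Lmap_one K4_def)
    next
      case (incl h) then show ?case using TK by auto
    next
      case (inv h) then show ?case using TK invT invNEG by auto
    next
      case (eng h1 h2)
      then obtain X Y where X: "X \<in> K4 T" "h1 = Lmap X" and Y: "Y \<in> K4 T" "h2 = Lmap Y" by auto
      have "h1 \<otimes>\<^bsub>BijGroup sl2\<^esub> h2 = Lmap (mmul X Y)"
        using X Y K4_isoZ[OF T] by (simp add: Lmap_mult Lmap_carrier)
      then show ?case using K4_closed[OF T X(1) Y(1)] by auto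
    qed
  qed
  show "(Lmap ` K4 T :: ('a m2 \<Rightarrow> _) set) \<subseteq> Hgrp u v w"
  proof
    fix x assume "x \<in> (Lmap ` K4 T :: ('a m2 \<Rightarrow> _) set)"
    moreover have "(Lmap T :: 'a m2 \<Rightarrow> _) \<in> Hgrp u v w" "(Lmap mNEG :: 'a m2 \<Rightarrow> _) \<in> Hgrp u v w"
      by (simp_all add: Hgrp_def tr negmap_Lmap generate.incl)
    moreover have "(Lmap (mmul T mNEG) :: 'a m2 \<Rightarrow> _) = Lmap T \<otimes>\<^bsub>BijGroup sl2\<^esub> Lmap mNEG"
      using T isoZs by (auto simp: Lmap_mult Lmap_carrier)
    moreover have "(Lmap I3 :: 'a m2 \<Rightarrow> _) \<in> Hgrp u v w" by (simp add: Hgrp_def Lmap_one[symmetric] generate.one)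
    ultimately show "x \<in> Hgrp u v w" unfolding K4_def
      by (auto simp: Hgrp_def intro: generate.eng)
  qed
qed



lemma tl_sign: "Bf (V3 a b c) (V3 a b c) < (0::int) \<Longrightarrow> b*c > 0 \<and> a*c > 0 \<and> a*b > 0"
proof -
  assume h: "Bf (V3 a b c) (V3 a b c) < (0::int)"
  have "4*(b*c) > (a-b-c)^2" "4*(a*c) > (b-a-c)^2" "4*(a*b) > (c-a-b)^2"
    using h by (simp_all add: power2_eq_square algebra_simps)
  moreover have "(a-b-c)^2 \<ge> 0" "(b-a-c)^2 \<ge> 0" "(c-a-b)^2 \<ge> 0" by simp_all
  ultimately show ?thesis by linarith
qed

lemma tl_bound: "4*(a*b) > (c-a-b)^2 \<Longrightarrow> (a::int) > 0 \<Longrightarrow> b > 0 \<Longrightarrow> c < 2*(a+b)"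
proof (rule ccontr)
  assume h: "4*(a*b) > (c-a-b)^2" "(a::int) > 0" "b > 0" "\<not> c < 2*(a+b)"
  then have "c - a - b \<ge> a + b" "a + b \<ge> 0" by auto
  then have "(c-a-b)^2 \<ge> (a+b)^2" by (intro power_mono) auto
  moreover have "(a+b)^2 \<ge> 4*(a*b)" using zero_le_power2[of "a-b"] by (simp add: power2_eq_square algebra_simps)
  ultimately show False using h(1) by linarith
qed

lemma timelike: "Bf (V3 a b c) (V3 a b c) < (0::int) \<Longrightarrow> b > 0 \<Longrightarrow>
   a > 0 \<and> c > 0 \<and> c < 2*(a+b) \<and> a < 2*(b+c) \<and> b < 2*(a+c)"
proof -
  assume h: "Bf (V3 a b c) (V3 a b c) < (0::int)" and b: "b > 0"
  have s: "b*c > 0" "a*c > 0" using tl_sign[OF h] by auto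
  have c: "c > 0" using s(1) b by (simp add: zero_less_mult_iff)
  have a: "a > 0" using s(2) c by (simp add: zero_less_mult_iff)
  have "4*(a*b) > (c-a-b)^2" "4*(b*c) > (a-b-c)^2" "4*(a*c) > (b-a-c)^2"
    using h by (simp_all add: power2_eq_square algebra_simps)
  then have "c < 2*(a+b)" "a < 2*(b+c)" "b < 2*(a+c)"
    using a b c tl_bound[of c a b] tl_bound[of a b c] tl_bound[of b a c] by blast+
  then show ?thesis using a c by blast
qed

fun y2 :: "int v3 \<Rightarrow> int" where "y2 (V3 a b c) = b"
definition inC :: "int v3 \<Rightarrow> bool" where "inC s \<longleftrightarrow> Bf s s < 0 \<and> y2 s > 0"
definition conepos :: "mat3 \<Rightarrow> bool" where "conepos A \<longleftrightarrow> (\<forall>s. inC s \<longrightarrow> inC (mv A s))"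
fun det3 :: "mat3 \<Rightarrow> int" where
  "det3 (M3 a b c d e f g h i) = a*(e*i - f*h) - b*(d*i - f*g) + c*(d*h - e*g)"

lemma det3_mmul: "det3 (mmul A B) = det3 A * det3 B"
  by (induct A; induct B) (simp only: mmul.simps det3.simps; algebra)

lemma conepos_mmul: "conepos A \<Longrightarrow> conepos B \<Longrightarrow> conepos (mmul A B)"
  by (simp add: conepos_def mv_mmul)

lemma conepos_inv:
  assumes A: "conepos A" and iB: "isom3 B" and ab: "mmul A B = I3"
  shows "conepos B"
  unfolding conepos_def
proof (intro allI impI)
  fix s assume s: "inC s"
  obtain p q r where t: "mv B s = V3 p q r" by (cases "mv B s")
  have n: "Bf (V3 p q r) (V3 p q r) < 0" using s isom3_Bf[OF iB, of s s] t by (simp add: inC_def)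
  have "q \<noteq> 0" using tl_sign[OF n] by auto
  moreover have "\<not> q < 0"
  proof
    assume q: "q < 0"
    have "inC (V3 (-p) (-q) (-r))" using n q by (simp add: inC_def)
    then have "inC (mv A (V3 (-p) (-q) (-r)))" using A by (simp add: conepos_def)
    moreover have "mv A (V3 (-p) (-q) (-r)) = vsc (-1) (mv A (mv B s))"
      by (simp add: t mv_vsc[symmetric])
    moreover have "mv A (mv B s) = s" by (simp add: mv_mmul[symmetric] ab)
    ultimately show False using s by (cases s) (simp add: inC_def)
  qed
  ultimately show "inC (mv B s)" using t n by (simp add: inC_def)
qed

definition Gset :: "('a::field_char_0 m2 \<Rightarrow> 'a m2) set" where
  "Gset = Lmap ` {A. isoZ A \<and> det3 A = 1 \<and> conepos A}"

lemma Gset_sub: "subgroup (Gset :: ('a::field_char_0 m2 \<Rightarrow> 'a m2) set) (BijGroup sl2)"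
proof (rule group.subgroupI[OF grpBG])
  show "(Gset :: ('a m2 \<Rightarrow> 'a m2) set) \<subseteq> carrier (BijGroup sl2)"
    by (auto simp: Gset_def intro: Lmap_carrier)
  have "conepos I3" by (simp add: conepos_def)
  moreover have "det3 I3 = 1" by (simp add: I3_def)
  ultimately show "(Gset :: ('a m2 \<Rightarrow> 'a m2) set) \<noteq> {}" using isoZ_I3 unfolding Gset_def by blast
  fix f g :: "'a m2 \<Rightarrow> 'a m2"
  assume f: "f \<in> Gset"
  then obtain A where A: "isoZ A" "det3 A = 1" "conepos A" and fA: "f = Lmap A" by (auto simp: Gset_def)
  then obtain B where ab: "mmul A B = I3" and ba: "mmul B A = I3" by (auto simp: isoZ_def)
  have B: "isoZ B" by (rule isoZ_inv[OF A(1) ab ba])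
  have "det3 A * det3 B = 1" using det3_mmul[of A B] ab by (simp add: I3_def)
  then have dB: "det3 B = 1" using A(2) by simp
  have cB: "conepos B" using conepos_inv[OF A(3) _ ab] B by (simp add: isoZ_def)
  have "inv\<^bsub>BijGroup sl2\<^esub> f = Lmap B" using Lmap_inv[OF A(1) ab ba] fA by simp
  then show "inv\<^bsub>BijGroup sl2\<^esub> f \<in> Gset" using B dB cB by (auto simp: Gset_def)
  assume "g \<in> Gset"
  then obtain C where C: "isoZ C" "det3 C = 1" "conepos C" and gC: "g = Lmap C" by (auto simp: Gset_def)
  have "f \<otimes>\<^bsub>BijGroup sl2\<^esub> g = Lmap (mmul A C)"
    using Lmap_mult[OF Lmap_carrier[OF A(1)] Lmap_carrier[OF C(1)]] fA gC by simp
  then show "f \<otimes>\<^bsub>BijGroup sl2\<^esub> g \<in> Gset"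
    using isoZ_mmul[OF A(1) C(1)] A C det3_mmul[of A C] conepos_mmul[OF A(3) C(3)] by (auto simp: Gset_def)
qed

lemma conepos_gen: "isom3 M \<Longrightarrow> (\<And>a b c. y2 (mv M (V3 a b c)) = a*pa + b*pb + c*pc) \<Longrightarrow>
   (\<And>a b c. a > 0 \<Longrightarrow> b > 0 \<Longrightarrow> c > 0 \<Longrightarrow> c < 2*(a+b) \<Longrightarrow> a < 2*(b+c) \<Longrightarrow> b < 2*(a+c) \<Longrightarrow> a*pa + b*pb + c*pc > 0)
   \<Longrightarrow> conepos M"
  unfolding conepos_def
proof (intro allI impI)
  fix s assume i: "isom3 M" and y: "\<And>a b c. y2 (mv M (V3 a b c)) = a*pa + b*pb + c*pc"
    and p: "\<And>a b c. a > 0 \<Longrightarrow> b > 0 \<Longrightarrow> c > 0 \<Longrightarrow> c < 2*(a+b) \<Longrightarrow> a < 2*(b+c) \<Longrightarrow> b < 2*(a+c) \<Longrightarrow> a*pa + b*pb + c*pc > 0"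
    and s: "inC s"
  obtain a b c where sv: "s = V3 a b c" by (cases s)
  have "Bf (V3 a b c) (V3 a b c) < 0" "b > 0" using s sv by (auto simp: inC_def)
  from timelike[OF this] have tl: "a > 0 \<and> c > 0 \<and> c < 2*(a+b) \<and> a < 2*(b+c) \<and> b < 2*(a+c)" .
  have "a*pa + b*pb + c*pc > 0" using tl \<open>b > 0\<close> by (intro p) auto
  then show "inC (mv M s)" using s isom3_Bf[OF i, of s s] y sv by (simp add: inC_def)
qed

lemma G1_Gset: "(Lmap mG1 :: 'a::field_char_0 m2 \<Rightarrow> _) \<in> Gset"
proof -
  have "conepos mG1"
    by (rule conepos_gen[where pa=2 and pb=2 and pc="-1"]) (use isoZ_G1 in \<open>auto simp: isoZ_def mG1_def\<close>)
  then show ?thesis using isoZ_G1 by (auto simp: Gset_def mG1_def)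
qed
lemma G2_Gset: "(Lmap mG2 :: 'a::field_char_0 m2 \<Rightarrow> _) \<in> Gset"
proof -
  have "conepos mG2"
    by (rule conepos_gen[where pa=0 and pb=1 and pc=0]) (use isoZ_G2 in \<open>auto simp: isoZ_def mG2_def\<close>)
  then show ?thesis using isoZ_G2 by (auto simp: Gset_def mG2_def)
qed
lemma G3_Gset: "(Lmap mG3 :: 'a::field_char_0 m2 \<Rightarrow> _) \<in> Gset"
proof -
  have "conepos mG3"
    by (rule conepos_gen[where pa=1 and pb=0 and pc=0]) (use isoZ_G3 in \<open>auto simp: isoZ_def mG3_def\<close>)
  then show ?thesis using isoZ_G3 by (auto simp: Gset_def mG3_def)
qed

lemma G_Gset: "(Ggrp :: ('a::field_char_0 m2 \<Rightarrow> 'a m2) set) \<subseteq> Gset"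
  unfolding Ggrp_eq
  by (rule group.generate_subgroup_incl[OF grpBG _ Gset_sub]) (auto simp: gensG_def G1_Gset G2_Gset G3_Gset)

lemma Lmap_Gset: "(Lmap X :: 'a::field_char_0 m2 \<Rightarrow> _) \<in> Gset \<Longrightarrow> det3 X = 1 \<and> conepos X"
  by (auto simp: Gset_def Lmap_inj)

lemma HG_triv:
  assumes T: "T \<in> {mTxy, mTyz, mTzx}"
  shows "(Lmap ` K4 T :: ('a::field_char_0 m2 \<Rightarrow> _) set) \<inter> Ggrp = {\<one>\<^bsub>BijGroup sl2\<^esub>}"
proof
  have nc: "\<not> conepos (mmul T mNEG)"
  proof
    assume "conepos (mmul T mNEG)"
    moreover have "inC (V3 1 1 1)" by (simp add: inC_def)
    ultimately have "inC (mv (mmul T mNEG) (V3 1 1 1))" by (simp add: conepos_def)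
    moreover have "mv (mmul T mNEG) (V3 1 1 1) = (V3 (-1) (-1) (-1) :: int v3)"
      using T by (elim insertE; simp add: mdefs)
    ultimately show False by (simp add: inC_def)
  qed
  have d: "det3 T \<noteq> 1" "det3 mNEG \<noteq> 1" using T by (elim insertE; simp add: mdefs)+
  show "(Lmap ` K4 T :: ('a m2 \<Rightarrow> _) set) \<inter> Ggrp \<subseteq> {\<one>\<^bsub>BijGroup sl2\<^esub>}"
  proof
    fix x assume x: "x \<in> (Lmap ` K4 T :: ('a m2 \<Rightarrow> _) set) \<inter> Ggrp"
    then obtain X where X: "X \<in> K4 T" "x = Lmap X" by auto
    have "x \<in> Gset" using x G_Gset by blast
    then have "(Lmap X :: 'a m2 \<Rightarrow> _) \<in> Gset" using X(2) by simp
    then have "det3 X = 1 \<and> conepos X" by (rule Lmap_Gset)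
    then have "X = I3" using X(1) nc d unfolding K4_def by blast
    then show "x \<in> {\<one>\<^bsub>BijGroup sl2\<^esub>}" using X by (simp add: Lmap_one)
  qed
  show "{\<one>\<^bsub>BijGroup sl2\<^esub>} \<subseteq> (Lmap ` K4 T :: ('a m2 \<Rightarrow> _) set) \<inter> Ggrp"
  proof -
    have "\<one>\<^bsub>BijGroup sl2\<^esub> \<in> (Ggrp :: ('a m2 \<Rightarrow> _) set)" by (rule subgroup.one_closed[OF Ggrp_sub])
    moreover have "\<one>\<^bsub>BijGroup sl2\<^esub> \<in> (Lmap ` K4 T :: ('a m2 \<Rightarrow> _) set)" unfolding K4_def Lmap_one by blast
    ultimately show ?thesis by blast
  qed
qed



lemma (in group) setmult_memI: "h \<in> H \<Longrightarrow> n \<in> N \<Longrightarrow> h \<otimes> n \<in> H <#> N"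
  unfolding set_mult_def by blast
lemma (in group) setmult_memE: "x \<in> H <#> N \<Longrightarrow> (\<And>h n. h \<in> H \<Longrightarrow> n \<in> N \<Longrightarrow> x = h \<otimes> n \<Longrightarrow> P) \<Longrightarrow> P"
  unfolding set_mult_def by blast

lemma (in group) setmult_mult:
  assumes H: "subgroup H G" and N: "subgroup N G"
    and nrm: "\<And>h n. h \<in> H \<Longrightarrow> n \<in> N \<Longrightarrow> h \<otimes> n \<otimes> inv h \<in> N"
    and xs: "x \<in> H <#> N" and ys: "y \<in> H <#> N"
  shows "x \<otimes> y \<in> H <#> N"
proof -
  obtain h1 n1 where h1: "h1 \<in> H" and n1: "n1 \<in> N" and x: "x = h1 \<otimes> n1" by (rule setmult_memE[OF xs])
  obtain h2 n2 where h2: "h2 \<in> H" and n2: "n2 \<in> N" and y: "y = h2 \<otimes> n2" by (rule setmult_memE[OF ys])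
  have c: "h1 \<in> carrier G" "h2 \<in> carrier G" "n1 \<in> carrier G" "n2 \<in> carrier G"
    using h1 h2 n1 n2 subgroup.subset[OF H] subgroup.subset[OF N] by auto
  have ih2: "inv h2 \<in> H" by (rule subgroup.m_inv_closed[OF H h2])
  have m: "inv h2 \<otimes> n1 \<otimes> inv (inv h2) \<in> N" by (rule nrm[OF ih2 n1])
  have e: "inv h2 \<otimes> n1 \<otimes> inv (inv h2) = inv h2 \<otimes> n1 \<otimes> h2" using c by simp
  have can: "h2 \<otimes> (inv h2 \<otimes> z) = z" if "z \<in> carrier G" for z
    using c that by (simp add: m_assoc[symmetric])
  have "(h1 \<otimes> h2) \<otimes> ((inv h2 \<otimes> n1 \<otimes> h2) \<otimes> n2) = h1 \<otimes> (h2 \<otimes> (inv h2 \<otimes> (n1 \<otimes> (h2 \<otimes> n2))))"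
    using c by (simp add: m_assoc)
  also have "\<dots> = h1 \<otimes> (n1 \<otimes> (h2 \<otimes> n2))" using c by (simp add: can)
  also have "\<dots> = x \<otimes> y" using c by (simp add: m_assoc x y)
  finally have eq: "x \<otimes> y = (h1 \<otimes> h2) \<otimes> ((inv h2 \<otimes> n1 \<otimes> h2) \<otimes> n2)" by simp
  have hh: "h1 \<otimes> h2 \<in> H" by (rule subgroup.m_closed[OF H h1 h2])
  have nn: "(inv h2 \<otimes> n1 \<otimes> h2) \<otimes> n2 \<in> N" using subgroup.m_closed[OF N m n2] e by simp
  show ?thesis unfolding eq by (rule setmult_memI[OF hh nn])
qed

lemma (in group) setmult_inv:
  assumes H: "subgroup H G" and N: "subgroup N G"
    and nrm: "\<And>h n. h \<in> H \<Longrightarrow> n \<in> N \<Longrightarrow> h \<otimes> n \<otimes> inv h \<in> N"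
    and xs: "x \<in> H <#> N"
  shows "inv x \<in> H <#> N"
proof -
  obtain h1 n1 where h1: "h1 \<in> H" and n1: "n1 \<in> N" and x: "x = h1 \<otimes> n1" by (rule setmult_memE[OF xs])
  have c: "h1 \<in> carrier G" "n1 \<in> carrier G"
    using h1 n1 subgroup.subset[OF H] subgroup.subset[OF N] by auto
  have ih1: "inv h1 \<in> H" by (rule subgroup.m_inv_closed[OF H h1])
  have in1: "inv n1 \<in> N" by (rule subgroup.m_inv_closed[OF N n1])
  have m: "h1 \<otimes> inv n1 \<otimes> inv h1 \<in> N" by (rule nrm[OF h1 in1])
  have can: "inv h1 \<otimes> (h1 \<otimes> z) = z" if "z \<in> carrier G" for z
    using c that by (simp add: m_assoc[symmetric])
  have "inv h1 \<otimes> (h1 \<otimes> inv n1 \<otimes> inv h1) = inv h1 \<otimes> (h1 \<otimes> (inv n1 \<otimes> inv h1))"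
    using c by (simp add: m_assoc)
  also have "\<dots> = inv n1 \<otimes> inv h1" using c by (simp add: can)
  also have "\<dots> = inv x" using c by (simp add: x inv_mult_group)
  finally have eq: "inv x = inv h1 \<otimes> (h1 \<otimes> inv n1 \<otimes> inv h1)" by simp
  show ?thesis unfolding eq by (rule setmult_memI[OF ih1 m])
qed

lemma (in group) gen_setmult:
  assumes H: "subgroup H G" and N: "subgroup N G"
    and nrm: "\<And>h n. h \<in> H \<Longrightarrow> n \<in> N \<Longrightarrow> h \<otimes> n \<otimes> inv h \<in> N"
    and B: "B \<subseteq> H <#> N"
  shows "k \<in> generate G B \<Longrightarrow> k \<in> H <#> N"
proof (induction k rule: generate.induct)
  case one
  have "\<one> \<otimes> \<one> \<in> H <#> N" by (rule setmult_memI[OF subgroup.one_closed[OF H] subgroup.one_closed[OF N]])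
  then show ?case by simp
next
  case (incl h) then show ?case using B by auto
next
  case (inv h) then show ?case using B setmult_inv[OF H N nrm] by auto
next
  case (eng h1 h2) then show ?case using setmult_mult[OF H N nrm] by auto
qed

lemma G_I3: "(Lmap I3 :: 'a::field_char_0 m2 \<Rightarrow> _) \<in> Ggrp"
  using subgroup.one_closed[OF Ggrp_sub] by (simp add: Lmap_one)

lemma K4_S: "T \<in> {mTxy, mTyz, mTzx} \<Longrightarrow> (Lmap ` K4 T :: ('a::field_char_0 m2 \<Rightarrow> _) set) \<subseteq> IsomZ"
  using K4_isoZ by (auto simp: IsomZ_S Sset_def)

lemma K4_sub: "T \<in> {mTxy, mTyz, mTzx} \<Longrightarrow> subgroup (Lmap ` K4 T :: ('a::field_char_0 m2 \<Rightarrow> _) set) (BijGroup sl2)"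
proof (rule group.subgroupI[OF grpBG])
  assume T: "T \<in> {mTxy, mTyz, mTzx}"
  show "(Lmap ` K4 T :: ('a m2 \<Rightarrow> _) set) \<subseteq> carrier (BijGroup sl2)"
  proof
    fix x :: "'a m2 \<Rightarrow> _" assume "x \<in> Lmap ` K4 T"
    then obtain X where "X \<in> K4 T" "x = Lmap X" by auto
    then show "x \<in> carrier (BijGroup sl2)" using Lmap_carrier[OF K4_isoZ[OF T]] by simp
  qed
  show "(Lmap ` K4 T :: ('a m2 \<Rightarrow> _) set) \<noteq> {}" by (simp add: K4_def)
  fix a b :: "'a m2 \<Rightarrow> 'a m2"
  assume a: "a \<in> Lmap ` K4 T"
  then obtain X where X: "X \<in> K4 T" "a = Lmap X" by auto
  have XX: "mmul X X = I3" using X(1) T by (auto simp: K4_def mdefs)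
  have "inv\<^bsub>BijGroup sl2\<^esub> (Lmap X :: 'a m2 \<Rightarrow> _) = Lmap X" by (rule Lmap_inv[OF K4_isoZ[OF T X(1)] XX XX])
  then have "inv\<^bsub>BijGroup sl2\<^esub> a = a" using X(2) by simp
  then show "inv\<^bsub>BijGroup sl2\<^esub> a \<in> Lmap ` K4 T" using a by simp
  assume "b \<in> Lmap ` K4 T"
  then obtain Y where Y: "Y \<in> K4 T" "b = Lmap Y" by auto
  have "a \<otimes>\<^bsub>BijGroup sl2\<^esub> b = Lmap (mmul X Y)"
    using X Y K4_isoZ[OF T] by (simp add: Lmap_mult Lmap_carrier)
  then show "a \<otimes>\<^bsub>BijGroup sl2\<^esub> b \<in> Lmap ` K4 T" using K4_closed[OF T X(1) Y(1)] by auto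
qed

lemma Tgen_split:
  assumes T: "T \<in> {mTxy, mTyz, mTzx}"
  shows "Tgen \<subseteq> (Lmap ` K4 T :: ('a::field_char_0 m2 \<Rightarrow> _) set) <#>\<^bsub>BijGroup sl2\<^esub> Ggrp"
proof -
  have GG: "group (BijGroup (sl2 :: 'a m2 set))" by (rule grpBG)
  have one: "\<And>x. x \<in> carrier (BijGroup sl2) \<Longrightarrow> x = \<one>\<^bsub>BijGroup sl2\<^esub> \<otimes>\<^bsub>BijGroup sl2\<^esub> (x :: 'a m2 \<Rightarrow> _)"
    "\<And>x. x \<in> carrier (BijGroup sl2) \<Longrightarrow> x = (x :: 'a m2 \<Rightarrow> _) \<otimes>\<^bsub>BijGroup sl2\<^esub> \<one>\<^bsub>BijGroup sl2\<^esub>"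
    using monoid.l_one[OF group.is_monoid[OF GG]] monoid.r_one[OF group.is_monoid[OF GG]] by auto
  have oneH: "\<one>\<^bsub>BijGroup sl2\<^esub> \<in> (Lmap ` K4 T :: ('a m2 \<Rightarrow> _) set)" by (simp add: Lmap_one K4_def)
  have oneG: "\<one>\<^bsub>BijGroup sl2\<^esub> \<in> (Ggrp :: ('a m2 \<Rightarrow> _) set)" by (rule subgroup.one_closed[OF Ggrp_sub])
  have GinS: "(g :: 'a m2 \<Rightarrow> _) \<in> Lmap ` K4 T <#>\<^bsub>BijGroup sl2\<^esub> Ggrp" if g: "g \<in> Ggrp" for g
  proof -
    have "g \<in> carrier (BijGroup sl2)" using g subgroup.subset[OF Ggrp_sub] by blast
    then have "g = \<one>\<^bsub>BijGroup sl2\<^esub> \<otimes>\<^bsub>BijGroup sl2\<^esub> g" by (rule one(1))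
    then show ?thesis using group.setmult_memI[OF GG oneH g] by simp
  qed
  have HinS: "(g :: 'a m2 \<Rightarrow> _) \<in> Lmap ` K4 T <#>\<^bsub>BijGroup sl2\<^esub> Ggrp" if g: "g \<in> Lmap ` K4 T" for g
  proof -
    have "g \<in> carrier (BijGroup sl2)" using g subgroup.subset[OF K4_sub[OF T]] by blast
    then have "g = g \<otimes>\<^bsub>BijGroup sl2\<^esub> \<one>\<^bsub>BijGroup sl2\<^esub>" by (rule one(2))
    then show ?thesis using group.setmult_memI[OF GG g oneG] by simp
  qed
  have TT: "\<And>m. m \<in> {mTxy, mTyz} \<Longrightarrow> (Lmap m :: 'a m2 \<Rightarrow> _) \<in> Lmap ` K4 T <#>\<^bsub>BijGroup sl2\<^esub> Ggrp"
  proof -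
    fix m assume m: "m \<in> {mTxy, mTyz}"
    have mm: "mmul T m \<in> {I3, mmul mG1 mG2, mmul mG2i mG1i}" using T m by (auto simp: mdefs)
    have g: "(Lmap (mmul T m) :: 'a m2 \<Rightarrow> _) \<in> Ggrp"
      using mm G_I3 G_Lmap_mult[OF G_G1 G_G2] G_Lmap_mult[OF G_G2i G_G1i] by auto
    have iT: "isoZ T" "isoZ m" using T m isoZs by auto
    have "(Lmap m :: 'a m2 \<Rightarrow> _) = Lmap T \<otimes>\<^bsub>BijGroup sl2\<^esub> Lmap (mmul T m)"
      using T m iT by (auto simp: Lmap_mult Lmap_carrier isoZ_mmul mdefs)
    moreover have "(Lmap T :: 'a m2 \<Rightarrow> _) \<in> Lmap ` K4 T" by (simp add: K4_def)
    ultimately show "(Lmap m :: 'a m2 \<Rightarrow> _) \<in> Lmap ` K4 T <#>\<^bsub>BijGroup sl2\<^esub> Ggrp"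
      using group.setmult_memI[OF GG _ g] by simp
  qed
  have "(Lmap mNEG :: 'a m2 \<Rightarrow> _) \<in> Lmap ` K4 T" by (simp add: K4_def)
  then show ?thesis unfolding Tgen_def using HinS GinS TT G_G1 G_G2 G_G3 by auto
qed

theorem semidirect:
  assumes T: "T \<in> {mTxy, mTyz, mTzx}" and tr: "transp u v w = (Lmap T :: 'a::field_char_0 m2 \<Rightarrow> _)"
  shows "int_semidirect (IsomZ :: ('a m2 \<Rightarrow> 'a m2) set) (Hgrp u v w) Ggrp"
proof -
  have GG: "group (BijGroup (sl2 :: 'a m2 set))" by (rule grpBG)
  have H: "Hgrp u v w = (Lmap ` K4 T :: ('a m2 \<Rightarrow> _) set)" by (rule Hgrp_eq[OF T tr])
  have nrm: "\<And>h n. h \<in> (Lmap ` K4 T :: ('a m2 \<Rightarrow> _) set) \<Longrightarrow> n \<in> Ggrp \<Longrightarrow>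
      h \<otimes>\<^bsub>BijGroup sl2\<^esub> n \<otimes>\<^bsub>BijGroup sl2\<^esub> inv\<^bsub>BijGroup sl2\<^esub> h \<in> Ggrp"
  proof -
    fix h n :: "'a m2 \<Rightarrow> 'a m2"
    assume h: "h \<in> (Lmap ` K4 T :: ('a m2 \<Rightarrow> _) set)" and n: "n \<in> Ggrp"
    have "h \<in> Ogrp" using h K4_S[OF T] IsomZ_eq by blast
    then show "h \<otimes>\<^bsub>BijGroup sl2\<^esub> n \<otimes>\<^bsub>BijGroup sl2\<^esub> inv\<^bsub>BijGroup sl2\<^esub> h \<in> Ggrp"
      using normal_O n by blast
  qed
  have KG: "IsomZ \<subseteq> (Lmap ` K4 T :: ('a m2 \<Rightarrow> _) set) <#>\<^bsub>BijGroup sl2\<^esub> Ggrp"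
    using group.gen_setmult[OF GG K4_sub[OF T] Ggrp_sub nrm Tgen_split[OF T]] IsomZ_eq
    by (auto simp: Ogrp_def)
  have GK: "(Lmap ` K4 T :: ('a m2 \<Rightarrow> _) set) <#>\<^bsub>BijGroup sl2\<^esub> Ggrp \<subseteq> IsomZ"
  proof
    fix x assume "x \<in> (Lmap ` K4 T :: ('a m2 \<Rightarrow> _) set) <#>\<^bsub>BijGroup sl2\<^esub> Ggrp"
    then obtain h n where "h \<in> Lmap ` K4 T" "n \<in> Ggrp" "x = h \<otimes>\<^bsub>BijGroup sl2\<^esub> n"
      by (rule group.setmult_memE[OF GG])
    then show "x \<in> IsomZ" using K4_S[OF T] Ggrp_IsomZ subgroup.m_closed[OF IsomZ_sub] by blast
  qed
  have norm: "Ggrp \<lhd> (BijGroup sl2)\<lparr>carrier := (IsomZ :: ('a m2 \<Rightarrow> _) set)\<rparr>"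
  proof (rule group.normal_invI)
    show "group ((BijGroup sl2)\<lparr>carrier := (IsomZ :: ('a m2 \<Rightarrow> _) set)\<rparr>)"
      by (rule group.subgroup_imp_group[OF GG IsomZ_sub])
    show "subgroup Ggrp ((BijGroup sl2)\<lparr>carrier := (IsomZ :: ('a m2 \<Rightarrow> _) set)\<rparr>)"
      by (rule group.subgroup_incl[OF GG Ggrp_sub IsomZ_sub Ggrp_IsomZ])
    fix x h :: "'a m2 \<Rightarrow> 'a m2"
    assume x: "x \<in> carrier ((BijGroup sl2)\<lparr>carrier := (IsomZ :: ('a m2 \<Rightarrow> _) set)\<rparr>)" and h: "h \<in> Ggrp"
    have xI: "x \<in> IsomZ" using x by simp
    have "inv\<^bsub>(BijGroup sl2)\<lparr>carrier := (IsomZ :: ('a m2 \<Rightarrow> _) set)\<rparr>\<^esub> x = inv\<^bsub>BijGroup sl2\<^esub> x"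
      by (rule group.m_inv_consistent[OF GG IsomZ_sub xI])
    then show "x \<otimes>\<^bsub>(BijGroup sl2)\<lparr>carrier := IsomZ\<rparr>\<^esub> h \<otimes>\<^bsub>(BijGroup sl2)\<lparr>carrier := IsomZ\<rparr>\<^esub>
        inv\<^bsub>(BijGroup sl2)\<lparr>carrier := IsomZ\<rparr>\<^esub> x \<in> Ggrp"
    proof -
      have xO: "x \<in> Ogrp" using xI by (simp add: IsomZ_eq)
      show ?thesis using normal_O[OF xO h] \<open>inv\<^bsub>(BijGroup sl2)\<lparr>carrier := (IsomZ :: ('a m2 \<Rightarrow> _) set)\<rparr>\<^esub> x = inv\<^bsub>BijGroup sl2\<^esub> x\<close> by simp
    qed
  qed
  show ?thesis unfolding int_semidirect_def H
    using IsomZ_sub K4_sub[OF T] norm K4_S[OF T] HG_triv[OF T] KG GK by blast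
qed



definition pm :: "int \<times> int \<Rightarrow> mat3" where
  "pm p = mmul (if fst p = 1 then mTxy else I3) (if snd p = 1 then mNEG else I3)"

abbreviation "Z2 \<equiv> integer_mod_group 2"

lemma cD: "carrier (Z2 \<times>\<times> Z2) = {(0,0),(0,1),(1,0),(1,1)}"
proof -
  have "{0..<int 2} = {0,1}" by auto
  then show ?thesis by (auto simp: carrier_integer_mod_group)
qed

lemma pm_mult: "p \<in> carrier (Z2 \<times>\<times> Z2) \<Longrightarrow> q \<in> carrier (Z2 \<times>\<times> Z2) \<Longrightarrow>
   pm (p \<otimes>\<^bsub>Z2 \<times>\<times> Z2\<^esub> q) = mmul (pm p) (pm q)"
  unfolding cD by (auto simp: pm_def mult_DirProd' mdefs)

lemma pm_img: "pm ` carrier (Z2 \<times>\<times> Z2) = K4 mTxy"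
  unfolding cD by (auto simp: pm_def K4_def mdefs)

lemma pm_inj: "inj_on pm (carrier (Z2 \<times>\<times> Z2))"
  unfolding cD by (auto simp: inj_on_def pm_def mdefs)

lemma iso_part: "(BijGroup (sl2 :: ('a::field_char_0) m2 set))\<lparr>carrier := Lmap ` K4 mTxy\<rparr> \<cong> Z2 \<times>\<times> Z2"
proof -
  have GD: "group (Z2 \<times>\<times> Z2)" by (rule DirProd_group) simp_all
  let ?psi = "\<lambda>p. (Lmap (pm p) :: 'a m2 \<Rightarrow> _)"
  have T: "mTxy \<in> {mTxy, mTyz, mTzx}" by simp
  have isoP: "\<And>p. p \<in> carrier (Z2 \<times>\<times> Z2) \<Longrightarrow> isoZ (pm p)"
    using K4_isoZ[OF T] pm_img by blast
  have hom: "?psi \<in> hom (Z2 \<times>\<times> Z2) ((BijGroup sl2)\<lparr>carrier := Lmap ` K4 mTxy\<rparr>)"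
    unfolding hom_def
  proof (intro CollectI conjI ballI)
    show "?psi \<in> carrier (Z2 \<times>\<times> Z2) \<rightarrow> carrier ((BijGroup sl2)\<lparr>carrier := Lmap ` K4 mTxy\<rparr>)"
      using pm_img by auto
    fix p q assume p: "p \<in> carrier (Z2 \<times>\<times> Z2)" and q: "q \<in> carrier (Z2 \<times>\<times> Z2)"
    show "?psi (p \<otimes>\<^bsub>Z2 \<times>\<times> Z2\<^esub> q) = ?psi p \<otimes>\<^bsub>(BijGroup sl2)\<lparr>carrier := Lmap ` K4 mTxy\<rparr>\<^esub> ?psi q"
    proof -
      have cp: "(Lmap (pm p) :: 'a m2 \<Rightarrow> _) \<in> carrier (BijGroup sl2)" by (rule Lmap_carrier[OF isoP[OF p]])
      have cq: "(Lmap (pm q) :: 'a m2 \<Rightarrow> _) \<in> carrier (BijGroup sl2)" by (rule Lmap_carrier[OF isoP[OF q]])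
      show ?thesis using pm_mult[OF p q] Lmap_mult[OF cp cq] by simp
    qed
  qed
  have bij: "bij_betw ?psi (carrier (Z2 \<times>\<times> Z2)) (carrier ((BijGroup sl2)\<lparr>carrier := Lmap ` K4 mTxy\<rparr>))"
  proof -
    have "inj_on ?psi (carrier (Z2 \<times>\<times> Z2))"
      using pm_inj by (auto simp: inj_on_def Lmap_inj)
    moreover have "?psi ` carrier (Z2 \<times>\<times> Z2) = Lmap ` K4 mTxy"
      using pm_img by (metis image_image)
    ultimately show ?thesis by (simp add: bij_betw_def)
  qed
  have "Z2 \<times>\<times> Z2 \<cong> (BijGroup (sl2 :: 'a m2 set))\<lparr>carrier := Lmap ` K4 mTxy\<rparr>"
    unfolding is_iso_def iso_def using hom bij by blast
  then show ?thesis by (rule group.iso_sym[OF GD])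
qed

theorem theorem5p4:
  shows "int_semidirect (IsomZ :: (('a::field_char_0) m2 \<Rightarrow> 'a m2) set) (Hgrp ex ey ez) Ggrp
       \<and> int_semidirect (IsomZ :: (('a::field_char_0) m2 \<Rightarrow> 'a m2) set) (Hgrp ey ez ex) Ggrp
       \<and> int_semidirect (IsomZ :: (('a::field_char_0) m2 \<Rightarrow> 'a m2) set) (Hgrp ez ex ey) Ggrp
       \<and> (BijGroup (sl2 :: ('a::field_char_0) m2 set))\<lparr>carrier := Hgrp ex ey ez\<rparr>
           \<cong> DirProd (integer_mod_group 2) (integer_mod_group 2)"
proof (intro conjI)
  show "int_semidirect (IsomZ :: ('a m2 \<Rightarrow> 'a m2) set) (Hgrp ex ey ez) Ggrp"
    by (rule semidirect[OF _ transp_xy]) simp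
  show "int_semidirect (IsomZ :: ('a m2 \<Rightarrow> 'a m2) set) (Hgrp ey ez ex) Ggrp"
    by (rule semidirect[OF _ transp_yz]) simp
  show "int_semidirect (IsomZ :: ('a m2 \<Rightarrow> 'a m2) set) (Hgrp ez ex ey) Ggrp"
    by (rule semidirect[OF _ transp_zx]) simp
  have "Hgrp ex ey ez = (Lmap ` K4 mTxy :: ('a m2 \<Rightarrow> _) set)"
    by (rule Hgrp_eq[OF _ transp_xy]) simp
  then show "(BijGroup (sl2 :: 'a m2 set))\<lparr>carrier := Hgrp ex ey ez\<rparr> \<cong> DirProd (integer_mod_group 2) (integer_mod_group 2)"
    using iso_part by simp
qed


end
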